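(* Let $\pi$ be a probability distribution on $(\mathsf{X},\mathscr{X})$ and $T_{1},T_{-1}$ sub-stochastic kernels on $\mathsf{X}$ with $\pi({\rm d}x)T_{1}(x,{\rm d}y)=\pi({\rm d}y)T_{-1}(y,{\rm d}x)$. Let $E=\mathsf{X}\times\{-1,1\}$, $\mu({\rm d}(x,v))=\tfrac12\pi({\rm d}x)\mathbb{I}\{v\in\{-1,1\}\}$ and $Qf(x,v)=f(x,-v)$. Call a pair of functions $\rho_{1,-1},\rho_{-1,1}:\mathsf{X}\to\mathbb{R}$ a switching rate if for all $(x,v)\in E$, $0\leq\rho_{v,-v}(x)\leq1-T_{v}(x,\mathsf{X})$ and $\rho_{v,-v}(x)-\rho_{-v,v}(x)=T_{-v}(x,\mathsf{X})-T_{v}(x,\mathsf{X})$, and for such $\rho$ define \[P^{{\rm lifted},\rho}\big((x,v);{\rm d}(y,w)\big)=\mathbb{I}\{w=v\}\big[T_{v}(x,{\rm d}y)+\delta_{x}({\rm d}y)\big(1-T_{v}(x,\mathsf{X})-\rho_{v,-v}(x)\big)\big]+\mathbb{I}\{w=-v\}\delta_{x}({\rm d}y)\rho_{v,-v}(x).\] Let $\tilde\rho_{v,-v}(x)=\max\{0,T_{-v}(x,\mathsf{X})-T_{v}(x,\mathsf{X})\}$. Then for any switching rate $\rho$, any $f\in L^{2}(\mu)$ with $Qf=f$ and any $\lambda\in[0,1)$, \[{\rm var}_{\lambda}(f,P^{{\rm lifted},\tilde\rho})\leq{\rm var}_{\lambda}(f,P^{{\rm lifted},\rho})\leq{\rm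 var}_{\lambda}(f,P^{{\rm lifted},1-T_{v}}),\] where $P^{{\rm lifted},1-T_{v}}$ uses $\rho_{v,-v}(x)=1-T_{v}(x,\mathsf{X})$.
   Context: For a Markov kernel $P$ on $E$ leaving $\mu$ invariant, $\lambda\in[0,1)$, $f\in L^{2}(\mu)$ and $\bar f=f-\mu(f)$: ${\rm var}_{\lambda}(f,P)=\|\bar f\|_{\mu}^{2}+2\sum_{k\geq1}\lambda^{k}\langle\bar f,P^{k}\bar f\rangle_{\mu}$, with $\langle f,g\rangle_{\mu}=\int fg\,{\rm d}\mu$. *)

theory Defs
  imports "HOL-Probability.Probability"
begin

text \<open>Velocities are integers restricted to {-1,1}. Kernels are indexed by velocity:
  T v x is the sub-probability measure T_v(x, .).\<close>

definition sub_stochastic_kernel :: "'a measure \<Rightarrow> ('a \<Rightarrow> 'a measure) \<Rightarrow> bool" where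
  "sub_stochastic_kernel M K \<longleftrightarrow> K \<in> M \<rightarrow>\<^sub>M subprob_algebra M"

definition lift_measure :: "'a measure \<Rightarrow> ('a \<times> int) measure" where
  "lift_measure \<pi> = \<pi> \<Otimes>\<^sub>M uniform_count_measure {-1, 1}"

text \<open>Switching rate: rho v x stands for rho_{v,-v}(x). Measurability is required so
  that the lifted kernel is a Markov kernel.\<close>
definition switching_rate ::
  "'a measure \<Rightarrow> (int \<Rightarrow> 'a \<Rightarrow> 'a measure) \<Rightarrow> (int \<Rightarrow> 'a \<Rightarrow> real) \<Rightarrow> bool" where
  "switching_rate \<pi> T \<rho> \<longleftrightarrow>
     (\<forall>v\<in>{-1,1}. \<rho> v \<in> borel_measurable \<pi>) \<and>
     (\<forall>x\<in>space \<pi>. \<forall>v\<in>{-1,1::int}.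
        0 \<le> \<rho> v x \<and> \<rho> v x \<le> 1 - measure (T v x) (space \<pi>) \<and>
        \<rho> v x - \<rho> (-v) x = measure (T (-v) x) (space \<pi>) - measure (T v x) (space \<pi>))"

definition lifted_op ::
  "'a measure \<Rightarrow> (int \<Rightarrow> 'a \<Rightarrow> 'a measure) \<Rightarrow> (int \<Rightarrow> 'a \<Rightarrow> real)
    \<Rightarrow> ('a \<times> int \<Rightarrow> real) \<Rightarrow> ('a \<times> int \<Rightarrow> real)" where
  "lifted_op \<pi> T \<rho> g = (\<lambda>(x, v).
      (\<integral>y. g (y, v) \<partial>(T v x))
      + g (x, v) * (1 - measure (T v x) (space \<pi>) - \<rho> v x)
      + g (x, -v) * \<rho> v x)"

definition var_lambda ::
  "'b measure \<Rightarrow> (('b \<Rightarrow> real) \<Rightarrow> ('b \<Rightarrow> real)) \<Rightarrow> real \<Rightarrow> ('b \<Rightarrow> real) \<Rightarrow> real" where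
  "var_lambda \<mu> P lam f =
     (let fb = (\<lambda>z. f z - integral\<^sup>L \<mu> f) in
       (\<integral>z. (fb z)\<^sup>2 \<partial>\<mu>)
       + 2 * (\<Sum>k. lam ^ (Suc k) * (\<integral>z. fb z * (P ^^ Suc k) fb z \<partial>\<mu>)))"

end

theory Submission
  imports Defs
begin

abbreviation "UU \<equiv> uniform_count_measure {-1, 1::int}"

lemma UU_prob: "prob_space UU" by (rule prob_space_uniform_count_measure) auto
lemma space_UU[simp]: "space UU = {-1,1}" by (simp add: space_uniform_count_measure)
lemma sets_UU[simp]: "sets UU = Pow {-1,1}" by (simp add: sets_uniform_count_measure)

lemma nn_integral_UU: "(\<integral>\<^sup>+v. g v \<partial>UU) = (g 1 + g (-1)) / 2"
  unfolding uniform_count_measure_def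
  by (subst nn_integral_point_measure_finite) (auto simp: divide_ennreal_def distrib_right add.commute mult.commute ring_distribs)

lemma integral_UU: "(\<integral>v. g v \<partial>UU) = (g 1 + g (-1)) / (2::real)"
  by (simp add: integral_uniform_count_measure)


definition L2 :: "'b measure \<Rightarrow> ('b \<Rightarrow> real) \<Rightarrow> bool" where
  "L2 M g \<longleftrightarrow> g \<in> borel_measurable M \<and> integrable M (\<lambda>z. (g z)\<^sup>2)"

lemma L2_meas: "L2 M g \<Longrightarrow> g \<in> borel_measurable M" by (simp add: L2_def)
lemma L2_int: "L2 M g \<Longrightarrow> integrable M (\<lambda>z. (g z)\<^sup>2)" by (simp add: L2_def)

lemma L2_prod_int:
  assumes "L2 M u" "L2 M w" shows "integrable M (\<lambda>z. u z * w z)"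
proof (rule Bochner_Integration.integrable_bound[of _ "\<lambda>z. (u z)\<^sup>2 + (w z)\<^sup>2"])
  show "integrable M (\<lambda>z. (u z)\<^sup>2 + (w z)\<^sup>2)" using assms by (auto simp: L2_def)
  show "(\<lambda>z. u z * w z) \<in> borel_measurable M" using assms by (auto simp: L2_def)
  have "\<And>z. \<bar>u z * w z\<bar> \<le> (u z)\<^sup>2 + (w z)\<^sup>2"
  proof -
    fix z
    have "0 \<le> (\<bar>u z\<bar> - \<bar>w z\<bar>)\<^sup>2" by simp
    also have "(\<bar>u z\<bar> - \<bar>w z\<bar>)\<^sup>2 = (u z)\<^sup>2 + (w z)\<^sup>2 - 2 * \<bar>u z * w z\<bar>"
      by (simp add: power2_diff abs_mult mult.assoc)
    finally have "2 * \<bar>u z * w z\<bar> \<le> (u z)\<^sup>2 + (w z)\<^sup>2" by simp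
    moreover have "0 \<le> (u z)\<^sup>2 + (w z)\<^sup>2" by simp
    ultimately show "\<bar>u z * w z\<bar> \<le> (u z)\<^sup>2 + (w z)\<^sup>2" by linarith
  qed
  then show "AE z in M. norm (u z * w z) \<le> norm ((u z)\<^sup>2 + (w z)\<^sup>2)" by auto
qed

lemma L2_add: assumes "L2 M u" "L2 M w" shows "L2 M (\<lambda>z. u z + w z)"
proof -
  have "integrable M (\<lambda>z. 2 * (u z * w z))" using L2_prod_int[OF assms] by simp
  then have "integrable M (\<lambda>z. (u z)\<^sup>2 + (w z)\<^sup>2 + 2 * (u z * w z))"
    using assms by (auto simp: L2_def)
  moreover have "(\<lambda>z. u z + w z) \<in> borel_measurable M" using assms by (auto simp: L2_def)
  ultimately show ?thesis using assms unfolding L2_def power2_sum by (simp add: mult.assoc)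
qed

lemma L2_scale: "L2 M u \<Longrightarrow> L2 M (\<lambda>z. c * u z)"
  unfolding L2_def by (auto simp: power_mult_distrib intro!: integrable_mult_right)

lemma L2_uminus: "L2 M u \<Longrightarrow> L2 M (\<lambda>z. - u z)"
  using L2_scale[of M u "-1"] by simp

lemma L2_diff: "L2 M u \<Longrightarrow> L2 M w \<Longrightarrow> L2 M (\<lambda>z. u z - w z)"
  using L2_add[of M u "\<lambda>z. - w z"] L2_uminus[of M w] by simp

lemma L2_zero: "L2 M (\<lambda>z. 0)" by (simp add: L2_def)

lemma L2_sum: "finite K \<Longrightarrow> (\<And>k. k \<in> K \<Longrightarrow> L2 M (g k)) \<Longrightarrow> L2 M (\<lambda>z. \<Sum>k\<in>K. g k z)"
  by (induction K rule: finite_induct) (auto intro: L2_add L2_zero)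

lemma L2_mult_bounded:
  assumes "L2 M u" "c \<in> borel_measurable M" "\<And>z. z \<in> space M \<Longrightarrow> \<bar>c z\<bar> \<le> B"
  shows "L2 M (\<lambda>z. c z * u z)"
  unfolding L2_def
proof
  show "(\<lambda>z. c z * u z) \<in> borel_measurable M" using assms by (auto simp: L2_def)
  show "integrable M (\<lambda>z. (c z * u z)\<^sup>2)"
  proof (rule Bochner_Integration.integrable_bound[of _ "\<lambda>z. B\<^sup>2 * (u z)\<^sup>2"])
    show "integrable M (\<lambda>z. B\<^sup>2 * (u z)\<^sup>2)" using assms by (auto simp: L2_def)
    show "(\<lambda>z. (c z * u z)\<^sup>2) \<in> borel_measurable M" using assms by (auto simp: L2_def)
    have "\<And>z. z \<in> space M \<Longrightarrow> (c z)\<^sup>2 \<le> B\<^sup>2"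
      using assms(3) by (metis abs_ge_zero power2_abs power_mono)
    then show "AE z in M. norm ((c z * u z)\<^sup>2) \<le> norm (B\<^sup>2 * (u z)\<^sup>2)"
      by (auto intro!: AE_I2 simp: power_mult_distrib mult_right_mono)
  qed
qed

lemma half_less_top: "((a::ennreal) + b) / 2 < top \<longleftrightarrow> a < top \<and> b < top"
  by (simp add: less_top[symmetric] ennreal_divide_eq_top_iff)

locale piS = fixes \<pi> :: "'a measure" assumes PI: "prob_space \<pi>"
begin
sublocale prob_space \<pi> by (rule PI)
abbreviation "mu \<equiv> lift_measure \<pi>"

lemma mu_def': "mu = \<pi> \<Otimes>\<^sub>M UU" by (simp add: lift_measure_def)

sublocale PS: pair_sigma_finite \<pi> UU
  unfolding pair_sigma_finite_def using prob_space_imp_sigma_finite[OF UU_prob] prob_space_imp_sigma_finite[OF PI] by blast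

lemma space_mu: "space mu = space \<pi> \<times> {-1,1}" by (simp add: mu_def' space_pair_measure)

lemma slice_meas:
  assumes "g \<in> borel_measurable mu" "v \<in> {-1,1}"
  shows "(\<lambda>x. g (x, v)) \<in> borel_measurable \<pi>"
proof -
  have v: "v \<in> space UU" using assms(2) by simp
  have "(\<lambda>x. (x, v)) \<in> \<pi> \<rightarrow>\<^sub>M mu" unfolding mu_def' using v by measurable
  from measurable_compose[OF this assms(1)] show ?thesis by simp
qed

lemma meas_from_slices:
  assumes "(\<lambda>x. g (x, 1)) \<in> borel_measurable \<pi>" "(\<lambda>x. g (x, -1)) \<in> borel_measurable \<pi>"
  shows "g \<in> borel_measurable mu"
proof -
  have "{z \<in> space mu. snd z = 1} = space \<pi> \<times> {1}" by (auto simp: space_mu)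
  then have p: "{z. snd z = 1} \<inter> space mu \<in> sets mu" by (auto simp: mu_def' pair_measureI Int_commute)
  have f1: "(\<lambda>z. g (fst z, 1)) \<in> borel_measurable mu"
    unfolding mu_def' by (rule measurable_compose[OF measurable_fst assms(1)])
  have f2: "(\<lambda>z. g (fst z, -1)) \<in> borel_measurable mu"
    unfolding mu_def' by (rule measurable_compose[OF measurable_fst assms(2)])
  have "(\<lambda>z. if z \<in> {z. snd z = 1} then g (fst z, 1) else g (fst z, -1)) \<in> borel_measurable mu"
    by (rule measurable_If_set[OF f1 f2 p])
  moreover have eq: "\<And>w. w \<in> space mu \<Longrightarrow> (if w \<in> {z. snd z = 1} then g (fst w, 1) else g (fst w, -1)) = g w"
  proof -
    fix w assume "w \<in> space mu"
    then obtain x v where "w = (x, v)" "v = 1 \<or> v = -1" by (auto simp: space_mu)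
    then show "(if w \<in> {z. snd z = 1} then g (fst w, 1) else g (fst w, -1)) = g w" by auto
  qed
  moreover have "(\<lambda>w. if w \<in> {z. snd z = 1} then g (fst w, 1) else g (fst w, -1)) \<in> borel_measurable mu \<longleftrightarrow> g \<in> borel_measurable mu"
    by (rule measurable_cong) (rule eq)
  ultimately show ?thesis by simp
qed

lemma nn_mu:
  assumes "F \<in> borel_measurable mu"
  shows "(\<integral>\<^sup>+z. F z \<partial>mu) = ((\<integral>\<^sup>+x. F (x, 1) \<partial>\<pi>) + (\<integral>\<^sup>+x. F (x, -1) \<partial>\<pi>)) / 2"
proof -
  have m1: "(\<lambda>x. F (x, 1)) \<in> borel_measurable \<pi>" and m2: "(\<lambda>x. F (x, -1)) \<in> borel_measurable \<pi>"
    using slice_meas[OF assms] by auto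
  have "(\<integral>\<^sup>+z. F z \<partial>mu) = (\<integral>\<^sup>+x. \<integral>\<^sup>+v. F (x, v) \<partial>UU \<partial>\<pi>)"
    using PS.M2.nn_integral_fst[of F] assms by (simp add: mu_def')
  also have "\<dots> = (\<integral>\<^sup>+x. (F (x, 1) + F (x, -1)) * inverse 2 \<partial>\<pi>)"
    by (simp add: nn_integral_UU divide_ennreal_def)
  also have "\<dots> = (\<integral>\<^sup>+x. (F (x, 1) + F (x, -1)) \<partial>\<pi>) * inverse 2"
    using m1 m2 by (simp add: nn_integral_multc)
  also have "\<dots> = ((\<integral>\<^sup>+x. F (x, 1) \<partial>\<pi>) + (\<integral>\<^sup>+x. F (x, -1) \<partial>\<pi>)) / 2"
    using m1 m2 by (simp add: nn_integral_add divide_ennreal_def)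
  finally show ?thesis .
qed

lemma int_mu:
  fixes F :: "'a \<times> int \<Rightarrow> real"
  assumes "F \<in> borel_measurable mu"
  shows "integrable mu F \<longleftrightarrow> integrable \<pi> (\<lambda>x. F (x, 1)) \<and> integrable \<pi> (\<lambda>x. F (x, -1))"
proof -
  have m1: "(\<lambda>x. F (x, 1)) \<in> borel_measurable \<pi>" and m2: "(\<lambda>x. F (x, -1)) \<in> borel_measurable \<pi>"
    using slice_meas[OF assms] by auto
  have "(\<lambda>z. ennreal (norm (F z))) \<in> borel_measurable mu" using assms by measurable
  from nn_mu[OF this] have "(\<integral>\<^sup>+z. norm (F z) \<partial>mu) < \<infinity> \<longleftrightarrow>
     (\<integral>\<^sup>+x. norm (F (x, 1)) \<partial>\<pi>) < \<infinity> \<and> (\<integral>\<^sup>+x. norm (F (x, -1)) \<partial>\<pi>) < \<infinity>"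
    using half_less_top by simp
  then show ?thesis
    using assms m1 m2 by (simp add: integrable_iff_bounded)
qed

lemma integral_mu:
  fixes F :: "'a \<times> int \<Rightarrow> real"
  assumes "integrable mu F"
  shows "(\<integral>z. F z \<partial>mu) = ((\<integral>x. F (x, 1) \<partial>\<pi>) + (\<integral>x. F (x, -1) \<partial>\<pi>)) / 2"
proof -
  have i: "integrable \<pi> (\<lambda>x. F (x, 1))" "integrable \<pi> (\<lambda>x. F (x, -1))"
    using int_mu[of F] assms by auto
  have "(\<integral>z. F z \<partial>mu) = (\<integral>x. \<integral>v. F (x, v) \<partial>UU \<partial>\<pi>)"
    using PS.integral_fst'[of F] assms by (simp add: mu_def')
  also have "\<dots> = (\<integral>x. (F (x, 1) + F (x, -1)) / 2 \<partial>\<pi>)"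
    by (simp add: integral_UU)
  also have "\<dots> = ((\<integral>x. F (x, 1) \<partial>\<pi>) + (\<integral>x. F (x, -1) \<partial>\<pi>)) / 2"
    using i by simp
  finally show ?thesis .
qed

lemma AE_UU: "(AE v in UU. Q v) \<Longrightarrow> v \<in> {-1,1} \<Longrightarrow> Q v"
proof (rule ccontr)
  assume a: "AE v in UU. Q v" "v \<in> {-1,1}" "\<not> Q v"
  obtain N where N: "{w \<in> space UU. \<not> Q w} \<subseteq> N" "emeasure UU N = 0" "N \<in> sets UU"
    by (rule AE_E[OF a(1)])
  have "v \<in> {w \<in> space UU. \<not> Q w}" using a(2,3) by simp
  then have "{v} \<subseteq> N" using N(1) by blast
  then have "emeasure UU {v} \<le> emeasure UU N" by (intro emeasure_mono N(3))
  moreover have "card {-1, 1::int} = 2" by simp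
  then have "emeasure UU {v} = inverse 2" using a(2) by (subst emeasure_uniform_count_measure) (simp_all add: divide_ennreal_def)
  ultimately show False using N(2) by simp
qed

lemma AE_mu_slice:
  assumes "AE z in mu. Q z" "v \<in> {-1,1}"
  shows "AE x in \<pi>. Q (x, v)"
proof -
  have "AE z in \<pi> \<Otimes>\<^sub>M UU. Q z" using assms(1) by (metis mu_def')
  from PS.AE_pair[OF this] have ae: "AE x in \<pi>. AE w in UU. Q (x, w)" .
  have "\<And>x. (AE w in UU. Q (x, w)) \<Longrightarrow> Q (x, v)"
    using AE_UU[of _ v] assms(2) by blast
  then show ?thesis by (rule eventually_mono[OF ae])
qed

lemma AE_mu_from_slices:
  assumes "AE x in \<pi>. Q (x, 1)" "AE x in \<pi>. Q (x, -1)"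
  shows "AE z in mu. Q z"
proof -
  obtain N1 where N1: "{x \<in> space \<pi>. \<not> Q (x, 1)} \<subseteq> N1" "N1 \<in> sets \<pi>" "emeasure \<pi> N1 = 0"
    using assms(1) by (auto elim: AE_E)
  obtain N2 where N2: "{x \<in> space \<pi>. \<not> Q (x, -1)} \<subseteq> N2" "N2 \<in> sets \<pi>" "emeasure \<pi> N2 = 0"
    using assms(2) by (auto elim: AE_E)
  let ?N = "N1 \<times> {-1,1} \<union> N2 \<times> {-1,1}"
  have s1: "N1 \<times> {-1,1} \<in> sets mu" "N2 \<times> {-1,1} \<in> sets mu" using N1 N2 by (auto simp: mu_def')
  have e1: "emeasure mu (N1 \<times> {-1,1}) = 0" using N1 s1
    by (simp add: mu_def' PS.M2.emeasure_pair_measure_Times)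
  have e2: "emeasure mu (N2 \<times> {-1,1}) = 0" using N2 s1
    by (simp add: mu_def' PS.M2.emeasure_pair_measure_Times)
  have "emeasure mu ?N \<le> emeasure mu (N1 \<times> {-1,1}) + emeasure mu (N2 \<times> {-1,1})"
    using s1 by (rule emeasure_subadditive)
  then have "emeasure mu ?N = 0" using e1 e2 by simp
  moreover have "{z \<in> space mu. \<not> Q z} \<subseteq> ?N" using N1(1) N2(1) by (auto simp: space_mu)
  moreover have "?N \<in> sets mu" using s1 by auto
  ultimately show ?thesis by (intro AE_I[where N="?N"])
qed

lemma L2_mu_iff:
  "L2 mu g \<longleftrightarrow> L2 \<pi> (\<lambda>x. g (x, 1)) \<and> L2 \<pi> (\<lambda>x. g (x, -1))"
proof
  assume a: "L2 mu g"
  then have m: "g \<in> borel_measurable mu" by (simp add: L2_def)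
  have m2: "(\<lambda>z. (g z)\<^sup>2) \<in> borel_measurable mu" using m by measurable
  have i: "integrable mu (\<lambda>z. (g z)\<^sup>2)" using a by (simp add: L2_def)
  have "integrable \<pi> (\<lambda>x. (g (x, 1))\<^sup>2) \<and> integrable \<pi> (\<lambda>x. (g (x, -1))\<^sup>2)"
    using int_mu[OF m2] i by simp
  moreover have "(\<lambda>x. g (x, 1)) \<in> borel_measurable \<pi>" "(\<lambda>x. g (x, -1)) \<in> borel_measurable \<pi>"
    using slice_meas[OF m] by simp_all
  ultimately show "L2 \<pi> (\<lambda>x. g (x, 1)) \<and> L2 \<pi> (\<lambda>x. g (x, -1))"
    unfolding L2_def by simp
next
  assume a: "L2 \<pi> (\<lambda>x. g (x, 1)) \<and> L2 \<pi> (\<lambda>x. g (x, -1))"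
  then have m: "g \<in> borel_measurable mu" by (intro meas_from_slices) (simp_all add: L2_def)
  have m2: "(\<lambda>z. (g z)\<^sup>2) \<in> borel_measurable mu" using m by measurable
  have "integrable mu (\<lambda>z. (g z)\<^sup>2)" using int_mu[OF m2] a by (simp add: L2_def)
  then show "L2 mu g" using m by (simp add: L2_def)
qed

definition ip :: "('a \<times> int \<Rightarrow> real) \<Rightarrow> ('a \<times> int \<Rightarrow> real) \<Rightarrow> real" where
  "ip u w = (\<integral>z. u z * w z \<partial>mu)"

lemma ip_slices: "L2 mu u \<Longrightarrow> L2 mu w \<Longrightarrow>
   ip u w = ((\<integral>x. u (x,1) * w (x,1) \<partial>\<pi>) + (\<integral>x. u (x,-1) * w (x,-1) \<partial>\<pi>)) / 2"
  unfolding ip_def by (rule integral_mu) (rule L2_prod_int)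

lemma ip_sym: "ip u w = ip w u" unfolding ip_def by (simp add: mult.commute)

lemma ip_add_right: "L2 mu u \<Longrightarrow> L2 mu w \<Longrightarrow> L2 mu y \<Longrightarrow> ip u (\<lambda>z. w z + y z) = ip u w + ip u y"
  unfolding ip_def using L2_prod_int[of mu u w] L2_prod_int[of mu u y] by (simp add: distrib_left)

lemma ip_diff_right: "L2 mu u \<Longrightarrow> L2 mu w \<Longrightarrow> L2 mu y \<Longrightarrow> ip u (\<lambda>z. w z - y z) = ip u w - ip u y"
  unfolding ip_def using L2_prod_int[of mu u w] L2_prod_int[of mu u y] by (simp add: right_diff_distrib)

lemma ip_scale_right: "ip u (\<lambda>z. c * w z) = c * ip u w"
  unfolding ip_def by (simp add: algebra_simps)

lemma ip_add_left: "L2 mu u \<Longrightarrow> L2 mu w \<Longrightarrow> L2 mu y \<Longrightarrow> ip (\<lambda>z. w z + y z) u = ip w u + ip y u"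
  using ip_add_right[of u w y] by (simp add: ip_sym)

lemma ip_diff_left: "L2 mu u \<Longrightarrow> L2 mu w \<Longrightarrow> L2 mu y \<Longrightarrow> ip (\<lambda>z. w z - y z) u = ip w u - ip y u"
  using ip_diff_right[of u w y] by (simp add: ip_sym)

lemma ip_scale_left: "ip (\<lambda>z. c * w z) u = c * ip w u"
  using ip_scale_right[of u c w] by (simp add: ip_sym)

lemma ip_sum_right: "finite K \<Longrightarrow> L2 mu u \<Longrightarrow> (\<And>k. k \<in> K \<Longrightarrow> L2 mu (g k)) \<Longrightarrow>
    ip u (\<lambda>z. \<Sum>k\<in>K. g k z) = (\<Sum>k\<in>K. ip u (g k))"
  unfolding ip_def using L2_prod_int[of mu u] by (simp add: sum_distrib_left)

lemma ip_cong_AE: "u \<in> borel_measurable mu \<Longrightarrow> w \<in> borel_measurable mu \<Longrightarrow> y \<in> borel_measurable mu \<Longrightarrow>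
   AE z in mu. w z = y z \<Longrightarrow> ip u w = ip u y"
  unfolding ip_def by (rule integral_cong_AE) auto

lemma ip_self_nonneg: "0 \<le> ip u u"
  unfolding ip_def by (simp add: power2_eq_square[symmetric])

lemma ip_bound:
  assumes "L2 mu u" "L2 mu w" "0 < t"
  shows "\<bar>ip u w\<bar> \<le> (t * ip u u + ip w w / t) / 2"
proof -
  have i1: "integrable mu (\<lambda>z. u z * w z)" using assms L2_prod_int by blast
  have i2: "integrable mu (\<lambda>z. (t * (u z * u z) + w z * w z / t) / 2)"
    using L2_prod_int[OF assms(1) assms(1)] L2_prod_int[OF assms(2) assms(2)] by simp
  have pw: "\<bar>u z * w z\<bar> \<le> (t * (u z * u z) + w z * w z / t) / 2" for z
  proof -
    have "0 \<le> (t * \<bar>u z\<bar> - \<bar>w z\<bar>)\<^sup>2 / t" using assms(3) by simp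
    also have "\<dots> = t * (u z * u z) + w z * w z / t - 2 * \<bar>u z * w z\<bar>"
      using assms(3) by (simp add: power2_eq_square field_simps abs_mult)
    finally show ?thesis by simp
  qed
  have "\<bar>ip u w\<bar> \<le> (\<integral>z. \<bar>u z * w z\<bar> \<partial>mu)" unfolding ip_def by (rule integral_abs_bound)
  also have "\<dots> \<le> (\<integral>z. (t * (u z * u z) + w z * w z / t) / 2 \<partial>mu)"
    using i1 i2 pw by (intro integral_mono) auto
  also have "\<dots> = (t * ip u u + ip w w / t) / 2"
    using L2_prod_int[OF assms(1) assms(1)] L2_prod_int[OF assms(2) assms(2)] by (simp add: ip_def)
  finally show ?thesis .
qed

end

context piS begin

definition nuK :: "('a \<Rightarrow> 'a measure) \<Rightarrow> ('a \<times> 'a) measure" where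
  "nuK K = \<pi> \<bind> (\<lambda>x. distr (K x) (\<pi> \<Otimes>\<^sub>M \<pi>) (Pair x))"

lemma space_pi_ne: "space \<pi> \<noteq> {}" by (rule not_empty)

lemma kernel_meas:
  assumes K: "K \<in> \<pi> \<rightarrow>\<^sub>M subprob_algebra \<pi>"
  shows "(\<lambda>x. distr (K x) (\<pi> \<Otimes>\<^sub>M \<pi>) (Pair x)) \<in> \<pi> \<rightarrow>\<^sub>M subprob_algebra (\<pi> \<Otimes>\<^sub>M \<pi>)"
proof (rule measurable_distr2[OF _ K])
  have "case_prod Pair = (\<lambda>z::'a\<times>'a. z)" by auto
  then show "case_prod Pair \<in> \<pi> \<Otimes>\<^sub>M \<pi> \<rightarrow>\<^sub>M \<pi> \<Otimes>\<^sub>M \<pi>" by simp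
qed

lemma kernel_facts:
  assumes K: "K \<in> \<pi> \<rightarrow>\<^sub>M subprob_algebra \<pi>" and x: "x \<in> space \<pi>"
  shows "subprob_space (K x)" "sets (K x) = sets \<pi>" "space (K x) = space \<pi>"
  using subprob_measurableD[OF K x] subprob_space_kernel[OF K x] by auto

lemma sets_nuK: "K \<in> \<pi> \<rightarrow>\<^sub>M subprob_algebra \<pi> \<Longrightarrow> sets (nuK K) = sets (\<pi> \<Otimes>\<^sub>M \<pi>)"
  unfolding nuK_def by (rule sets_bind[OF _ space_pi_ne]) simp

lemma space_nuK: "K \<in> \<pi> \<rightarrow>\<^sub>M subprob_algebra \<pi> \<Longrightarrow> space (nuK K) = space (\<pi> \<Otimes>\<^sub>M \<pi>)"
  using sets_nuK by (rule sets_eq_imp_space_eq)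

lemma subprob_nuK: "K \<in> \<pi> \<rightarrow>\<^sub>M subprob_algebra \<pi> \<Longrightarrow> subprob_space (nuK K)"
  unfolding nuK_def by (rule subprob_space_bind[OF _ kernel_meas]) (auto simp: prob_space_imp_subprob_space PI)

lemma nn_nuK:
  assumes K: "K \<in> \<pi> \<rightarrow>\<^sub>M subprob_algebra \<pi>" and F: "F \<in> borel_measurable (\<pi> \<Otimes>\<^sub>M \<pi>)"
  shows "(\<integral>\<^sup>+z. F z \<partial>nuK K) = (\<integral>\<^sup>+x. \<integral>\<^sup>+y. F (x, y) \<partial>K x \<partial>\<pi>)"
proof -
  have "(\<integral>\<^sup>+z. F z \<partial>nuK K) = (\<integral>\<^sup>+x. \<integral>\<^sup>+z. F z \<partial>distr (K x) (\<pi> \<Otimes>\<^sub>M \<pi>) (Pair x) \<partial>\<pi>)"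
    unfolding nuK_def by (rule nn_integral_bind[OF F kernel_meas[OF K]])
  also have "\<dots> = (\<integral>\<^sup>+x. \<integral>\<^sup>+y. F (x, y) \<partial>K x \<partial>\<pi>)"
  proof (rule nn_integral_cong)
    fix x assume x: "x \<in> space \<pi>"
    have "Pair x \<in> K x \<rightarrow>\<^sub>M \<pi> \<Otimes>\<^sub>M \<pi>"
      using kernel_facts[OF K x] x by (simp add: measurable_Pair1' cong: measurable_cong_sets)
    then show "(\<integral>\<^sup>+z. F z \<partial>distr (K x) (\<pi> \<Otimes>\<^sub>M \<pi>) (Pair x)) = (\<integral>\<^sup>+y. F (x, y) \<partial>K x)"
      using F by (simp add: nn_integral_distr)
  qed
  finally show ?thesis .
qed

lemma int_meas2:
  fixes F :: "'a \<times> 'a \<Rightarrow> real"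
  assumes K: "K \<in> \<pi> \<rightarrow>\<^sub>M subprob_algebra \<pi>" and F: "F \<in> borel_measurable (\<pi> \<Otimes>\<^sub>M \<pi>)"
  shows "(\<lambda>x. \<integral>y. F (x, y) \<partial>K x) \<in> borel_measurable \<pi>"
proof -
  have "(\<lambda>x. integral\<^sup>L (distr (K x) (\<pi> \<Otimes>\<^sub>M \<pi>) (Pair x)) F) \<in> borel_measurable \<pi>"
    by (rule measurable_compose[OF kernel_meas[OF K] integral_measurable_subprob_algebra[OF F]])
  moreover have "\<And>x. x \<in> space \<pi> \<Longrightarrow> integral\<^sup>L (distr (K x) (\<pi> \<Otimes>\<^sub>M \<pi>) (Pair x)) F = (\<integral>y. F (x, y) \<partial>K x)"
  proof -
    fix x assume x: "x \<in> space \<pi>"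
    have "Pair x \<in> K x \<rightarrow>\<^sub>M \<pi> \<Otimes>\<^sub>M \<pi>"
      using kernel_facts[OF K x] x by (simp add: measurable_Pair1' cong: measurable_cong_sets)
    then show "integral\<^sup>L (distr (K x) (\<pi> \<Otimes>\<^sub>M \<pi>) (Pair x)) F = (\<integral>y. F (x, y) \<partial>K x)"
      using F by (simp add: integral_distr)
  qed
  ultimately show ?thesis using measurable_cong by (rule_tac measurable_cong[THEN iffD1]) auto
qed

lemma pair_slice_meas:
  assumes K: "K \<in> \<pi> \<rightarrow>\<^sub>M subprob_algebra \<pi>" and x: "x \<in> space \<pi>"
    and F: "F \<in> borel_measurable (\<pi> \<Otimes>\<^sub>M \<pi>)"
  shows "(\<lambda>y. F (x, y)) \<in> borel_measurable (K x)"
proof -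
  have "(\<lambda>y. F (x, y)) \<in> borel_measurable \<pi>" using measurable_Pair2[OF F x] .
  then show ?thesis using kernel_facts(2)[OF K x] by (simp cong: measurable_cong_sets)
qed

lemma int_nuK_nonneg:
  fixes G :: "'a \<times> 'a \<Rightarrow> real"
  assumes K: "K \<in> \<pi> \<rightarrow>\<^sub>M subprob_algebra \<pi>" and G: "integrable (nuK K) G" and nn: "\<And>z. 0 \<le> G z"
  shows "AE x in \<pi>. integrable (K x) (\<lambda>y. G (x, y))"
    "integrable \<pi> (\<lambda>x. \<integral>y. G (x, y) \<partial>K x)"
    "integral\<^sup>L (nuK K) G = (\<integral>x. \<integral>y. G (x, y) \<partial>K x \<partial>\<pi>)"
proof -
  have Gm: "G \<in> borel_measurable (\<pi> \<Otimes>\<^sub>M \<pi>)"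
    using borel_measurable_integrable[OF G] sets_nuK[OF K] by (simp cong: measurable_cong_sets)
  have Gme: "(\<lambda>z. ennreal (G z)) \<in> borel_measurable (\<pi> \<Otimes>\<^sub>M \<pi>)" using Gm by measurable
  have fin: "(\<integral>\<^sup>+z. ennreal (G z) \<partial>nuK K) < \<infinity>"
    using G nn by (simp add: integrable_iff_bounded)
  have eq: "(\<integral>\<^sup>+z. ennreal (G z) \<partial>nuK K) = (\<integral>\<^sup>+x. \<integral>\<^sup>+y. ennreal (G (x, y)) \<partial>K x \<partial>\<pi>)"
    by (rule nn_nuK[OF K Gme])
  have inm: "(\<lambda>x. \<integral>\<^sup>+y. ennreal (G (x, y)) \<partial>K x) \<in> borel_measurable \<pi>"
    using nn_integral_measurable_subprob_algebra2[where f="\<lambda>x y. ennreal (G (x, y))", OF _ K] Gme by simp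
  have "AE x in \<pi>. (\<integral>\<^sup>+y. ennreal (G (x, y)) \<partial>K x) \<noteq> \<infinity>"
    using fin eq by (intro nn_integral_PInf_AE inm) simp
  then have ae: "AE x in \<pi>. integrable (K x) (\<lambda>y. G (x, y))"
  proof (rule AE_mp[OF _ AE_I2], intro impI)
    fix x assume x: "x \<in> space \<pi>" and f: "(\<integral>\<^sup>+y. ennreal (G (x, y)) \<partial>K x) \<noteq> \<infinity>"
    show "integrable (K x) (\<lambda>y. G (x, y))"
      using pair_slice_meas[OF K x Gm] f nn by (intro integrableI_nonneg) (auto simp: less_top)
  qed
  show "AE x in \<pi>. integrable (K x) (\<lambda>y. G (x, y))" by (rule ae)
  have hm: "(\<lambda>x. \<integral>y. G (x, y) \<partial>K x) \<in> borel_measurable \<pi>" by (rule int_meas2[OF K Gm])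
  have hnn: "\<And>x. 0 \<le> (\<integral>y. G (x, y) \<partial>K x)" using nn by (simp add: integral_nonneg)
  have eq2: "(\<integral>\<^sup>+x. ennreal (\<integral>y. G (x, y) \<partial>K x) \<partial>\<pi>) = (\<integral>\<^sup>+x. \<integral>\<^sup>+y. ennreal (G (x, y)) \<partial>K x \<partial>\<pi>)"
  proof (rule nn_integral_cong_AE)
    show "AE x in \<pi>. ennreal (\<integral>y. G (x, y) \<partial>K x) = (\<integral>\<^sup>+y. ennreal (G (x, y)) \<partial>K x)"
      using ae by eventually_elim (simp add: nn_integral_eq_integral nn)
  qed
  show hi: "integrable \<pi> (\<lambda>x. \<integral>y. G (x, y) \<partial>K x)"
    using hm hnn fin eq eq2 by (intro integrableI_nonneg) auto
  have "(\<integral>x. \<integral>y. G (x, y) \<partial>K x \<partial>\<pi>) = enn2real (\<integral>\<^sup>+x. ennreal (\<integral>y. G (x, y) \<partial>K x) \<partial>\<pi>)"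
    using hm hnn by (intro integral_eq_nn_integral) auto
  also have "\<dots> = enn2real (\<integral>\<^sup>+z. ennreal (G z) \<partial>nuK K)" using eq eq2 by simp
  also have "\<dots> = integral\<^sup>L (nuK K) G"
    using borel_measurable_integrable[OF G] nn by (intro integral_eq_nn_integral[symmetric]) auto
  finally show "integral\<^sup>L (nuK K) G = (\<integral>x. \<integral>y. G (x, y) \<partial>K x \<partial>\<pi>)" by simp
qed

lemma int_nuK:
  fixes F :: "'a \<times> 'a \<Rightarrow> real"
  assumes K: "K \<in> \<pi> \<rightarrow>\<^sub>M subprob_algebra \<pi>" and F: "integrable (nuK K) F"
  shows "AE x in \<pi>. integrable (K x) (\<lambda>y. F (x, y))"
    "integrable \<pi> (\<lambda>x. \<integral>y. F (x, y) \<partial>K x)"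
    "integral\<^sup>L (nuK K) F = (\<integral>x. \<integral>y. F (x, y) \<partial>K x \<partial>\<pi>)"
proof -
  define Fp where "Fp = (\<lambda>z. max (F z) 0)"
  define Fn where "Fn = (\<lambda>z. max (- F z) 0)"
  have Fe: "F = (\<lambda>z. Fp z - Fn z)" by (auto simp: Fp_def Fn_def fun_eq_iff max_def)
  have ip: "integrable (nuK K) Fp" unfolding Fp_def using F by (intro integrable_max) auto
  have in_: "integrable (nuK K) Fn" unfolding Fn_def using F by (intro integrable_max) auto
  have pnn: "\<And>z. 0 \<le> Fp z" "\<And>z. 0 \<le> Fn z" by (auto simp: Fp_def Fn_def)
  note P = int_nuK_nonneg[OF K ip pnn(1)] and N = int_nuK_nonneg[OF K in_ pnn(2)]
  have ae: "AE x in \<pi>. integrable (K x) (\<lambda>y. Fp (x, y)) \<and> integrable (K x) (\<lambda>y. Fn (x, y))"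
    using P(1) N(1) by eventually_elim simp
  show "AE x in \<pi>. integrable (K x) (\<lambda>y. F (x, y))"
    using ae by eventually_elim (simp add: Fe)
  have aeq: "AE x in \<pi>. (\<integral>y. F (x, y) \<partial>K x) = (\<integral>y. Fp (x, y) \<partial>K x) - (\<integral>y. Fn (x, y) \<partial>K x)"
    using ae by eventually_elim (simp add: Fe)
  have Fm: "F \<in> borel_measurable (\<pi> \<Otimes>\<^sub>M \<pi>)"
    using borel_measurable_integrable[OF F] sets_nuK[OF K] by (simp cong: measurable_cong_sets)
  have hi: "integrable \<pi> (\<lambda>x. (\<integral>y. Fp (x, y) \<partial>K x) - (\<integral>y. Fn (x, y) \<partial>K x))"
    using P(2) N(2) by (rule Bochner_Integration.integrable_diff)
  show "integrable \<pi> (\<lambda>x. \<integral>y. F (x, y) \<partial>K x)"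
    by (rule integrable_cong_AE_imp[OF hi int_meas2[OF K Fm]]) (use aeq in \<open>auto elim: AE_mp\<close>)
  have "(\<integral>x. \<integral>y. F (x, y) \<partial>K x \<partial>\<pi>) = (\<integral>x. (\<integral>y. Fp (x, y) \<partial>K x) - (\<integral>y. Fn (x, y) \<partial>K x) \<partial>\<pi>)"
    using aeq by (intro integral_cong_AE int_meas2[OF K Fm] borel_measurable_integrable[OF hi]) auto
  also have "\<dots> = integral\<^sup>L (nuK K) Fp - integral\<^sup>L (nuK K) Fn"
    using P(2,3) N(2,3) by simp
  also have "\<dots> = integral\<^sup>L (nuK K) F" using ip in_ by (simp add: Fe)
  finally show "integral\<^sup>L (nuK K) F = (\<integral>x. \<integral>y. F (x, y) \<partial>K x \<partial>\<pi>)" by simp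
qed

end

locale LK = piS \<pi> for \<pi> :: "'a measure" +
  fixes T :: "int \<Rightarrow> 'a \<Rightarrow> 'a measure"
  assumes K1: "T 1 \<in> \<pi> \<rightarrow>\<^sub>M subprob_algebra \<pi>" and Km: "T (-1) \<in> \<pi> \<rightarrow>\<^sub>M subprob_algebra \<pi>"
  and DB: "\<And>A B. A \<in> sets \<pi> \<Longrightarrow> B \<in> sets \<pi> \<Longrightarrow>
           (\<integral>\<^sup>+ x. indicator A x * emeasure (T 1 x) B \<partial>\<pi>)
         = (\<integral>\<^sup>+ y. indicator B y * emeasure (T (-1) y) A \<partial>\<pi>)"
begin

lemma TK: "v \<in> {-1,1} \<Longrightarrow> T v \<in> \<pi> \<rightarrow>\<^sub>M subprob_algebra \<pi>"
  using K1 Km by auto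

lemma emeasure_nuK_times:
  assumes K: "K \<in> \<pi> \<rightarrow>\<^sub>M subprob_algebra \<pi>" and a: "a \<in> sets \<pi>" and b: "b \<in> sets \<pi>"
  shows "emeasure (nuK K) (a \<times> b) = (\<integral>\<^sup>+x. indicator a x * emeasure (K x) b \<partial>\<pi>)"
proof -
  have ab: "a \<times> b \<in> sets (nuK K)" using a b sets_nuK[OF K] by simp
  have "emeasure (nuK K) (a \<times> b) = (\<integral>\<^sup>+z. indicator (a \<times> b) z \<partial>nuK K)"
    using ab by simp
  also have "\<dots> = (\<integral>\<^sup>+x. \<integral>\<^sup>+y. indicator (a \<times> b) (x, y) \<partial>K x \<partial>\<pi>)"
    using a b by (intro nn_nuK[OF K]) simp
  also have "\<dots> = (\<integral>\<^sup>+x. indicator a x * emeasure (K x) b \<partial>\<pi>)"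
  proof (rule nn_integral_cong)
    fix x assume x: "x \<in> space \<pi>"
    have "(\<integral>\<^sup>+y. indicator (a \<times> b) (x, y) \<partial>K x) = (\<integral>\<^sup>+y. indicator a x * indicator b y \<partial>K x)"
      by (simp add: indicator_times)
    also have "\<dots> = indicator a x * emeasure (K x) b"
      using b kernel_facts[OF K x] by (simp add: nn_integral_cmult_indicator)
    finally show "(\<integral>\<^sup>+y. indicator (a \<times> b) (x, y) \<partial>K x) = indicator a x * emeasure (K x) b" .
  qed
  finally show ?thesis .
qed

lemma swap_meas: "K \<in> \<pi> \<rightarrow>\<^sub>M subprob_algebra \<pi> \<Longrightarrow> (\<lambda>(x, y). (y, x)) \<in> nuK K \<rightarrow>\<^sub>M \<pi> \<Otimes>\<^sub>M \<pi>"
  using sets_nuK measurable_pair_swap' by (metis measurable_cong_sets)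

lemma nu_swap: "nuK (T 1) = distr (nuK (T (-1))) (\<pi> \<Otimes>\<^sub>M \<pi>) (\<lambda>(x, y). (y, x))"
proof (rule measure_eqI_generator_eq[OF Int_stable_pair_measure_generator pair_measure_closed])
  let ?\<Omega> = "space \<pi> \<times> space \<pi>"
  let ?E = "{a \<times> b |a b. a \<in> sets \<pi> \<and> b \<in> sets \<pi>}"
  show "sets (nuK (T 1)) = sigma_sets ?\<Omega> ?E" using sets_nuK[OF K1] by (simp add: sets_pair_measure)
  show "sets (distr (nuK (T (-1))) (\<pi> \<Otimes>\<^sub>M \<pi>) (\<lambda>(x, y). (y, x))) = sigma_sets ?\<Omega> ?E"
    by (simp add: sets_pair_measure)
  show "range (\<lambda>i. ?\<Omega>) \<subseteq> ?E" by auto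
  show "(\<Union>i. ?\<Omega>) = ?\<Omega>" by simp
  show "\<And>i. emeasure (nuK (T 1)) ?\<Omega> \<noteq> \<infinity>"
    using subprob_space.emeasure_subprob_space_less_top[OF subprob_nuK[OF K1]] by simp
  fix X assume "X \<in> ?E"
  then obtain a b where X: "X = a \<times> b" and a: "a \<in> sets \<pi>" and b: "b \<in> sets \<pi>" by auto
  have "emeasure (distr (nuK (T (-1))) (\<pi> \<Otimes>\<^sub>M \<pi>) (\<lambda>(x, y). (y, x))) (a \<times> b)
      = emeasure (nuK (T (-1))) ((\<lambda>(x, y). (y, x)) -` (a \<times> b) \<inter> space (nuK (T (-1))))"
    using a b by (intro emeasure_distr swap_meas[OF Km]) auto
  also have "(\<lambda>(x, y). (y, x)) -` (a \<times> b) \<inter> space (nuK (T (-1))) = b \<times> a"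
    using space_nuK[OF Km] sets.sets_into_space[OF a] sets.sets_into_space[OF b]
    by (auto simp: space_pair_measure)
  finally show "emeasure (nuK (T 1)) X = emeasure (distr (nuK (T (-1))) (\<pi> \<Otimes>\<^sub>M \<pi>) (\<lambda>(x, y). (y, x))) X"
    using emeasure_nuK_times[OF K1 a b] emeasure_nuK_times[OF Km b a] DB[OF a b] X by simp
qed

lemma DBn1:
  assumes F: "F \<in> borel_measurable (\<pi> \<Otimes>\<^sub>M \<pi>)"
  shows "(\<integral>\<^sup>+x. \<integral>\<^sup>+y. F (x, y) \<partial>T 1 x \<partial>\<pi>) = (\<integral>\<^sup>+y. \<integral>\<^sup>+x. F (x, y) \<partial>T (-1) y \<partial>\<pi>)"
proof -
  have Fs: "(\<lambda>z. F (snd z, fst z)) \<in> borel_measurable (\<pi> \<Otimes>\<^sub>M \<pi>)" using F by measurable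
  have "(\<integral>\<^sup>+x. \<integral>\<^sup>+y. F (x, y) \<partial>T 1 x \<partial>\<pi>) = (\<integral>\<^sup>+z. F z \<partial>nuK (T 1))"
    by (rule nn_nuK[OF K1 F, symmetric])
  also have "\<dots> = (\<integral>\<^sup>+z. F ((\<lambda>(x, y). (y, x)) z) \<partial>nuK (T (-1)))"
    unfolding nu_swap using F by (intro nn_integral_distr swap_meas[OF Km]) auto
  also have "\<dots> = (\<integral>\<^sup>+z. F (snd z, fst z) \<partial>nuK (T (-1)))"
    by (simp add: case_prod_beta)
  also have "\<dots> = (\<integral>\<^sup>+y. \<integral>\<^sup>+x. F (x, y) \<partial>T (-1) y \<partial>\<pi>)"
    using nn_nuK[OF Km Fs] by simp
  finally show ?thesis .
qed

lemma DBn: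
  assumes F: "F \<in> borel_measurable (\<pi> \<Otimes>\<^sub>M \<pi>)" and v: "v \<in> {-1,1}"
  shows "(\<integral>\<^sup>+x. \<integral>\<^sup>+y. F (x, y) \<partial>T v x \<partial>\<pi>) = (\<integral>\<^sup>+y. \<integral>\<^sup>+x. F (x, y) \<partial>T (-v) y \<partial>\<pi>)"
proof (cases "v = 1")
  case True then show ?thesis using DBn1[OF F] by simp
next
  case False
  then have v1: "v = -1" using v by auto
  have Fs: "(\<lambda>z. F (snd z, fst z)) \<in> borel_measurable (\<pi> \<Otimes>\<^sub>M \<pi>)" using F by measurable
  show ?thesis using DBn1[OF Fs] v1 by simp
qed

lemma DBr1:
  fixes F :: "'a \<times> 'a \<Rightarrow> real"
  assumes F: "integrable (nuK (T 1)) F"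
  shows "integrable (nuK (T (-1))) (\<lambda>z. F (snd z, fst z))"
    "(\<integral>x. \<integral>y. F (x, y) \<partial>T 1 x \<partial>\<pi>) = (\<integral>y. \<integral>x. F (x, y) \<partial>T (-1) y \<partial>\<pi>)"
proof -
  have Fm: "F \<in> borel_measurable (\<pi> \<Otimes>\<^sub>M \<pi>)"
    using borel_measurable_integrable[OF F] sets_nuK[OF K1] by (simp cong: measurable_cong_sets)
  have "integrable (nuK (T (-1))) (\<lambda>z. F ((\<lambda>(x, y). (y, x)) z))"
    using F unfolding nu_swap by (subst (asm) integrable_distr_eq[OF swap_meas[OF Km] Fm])
  then show i: "integrable (nuK (T (-1))) (\<lambda>z. F (snd z, fst z))" by (simp add: case_prod_beta)
  have "(\<integral>x. \<integral>y. F (x, y) \<partial>T 1 x \<partial>\<pi>) = integral\<^sup>L (nuK (T 1)) F"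
    using int_nuK(3)[OF K1 F] by simp
  also have "\<dots> = (\<integral>z. F ((\<lambda>(x, y). (y, x)) z) \<partial>nuK (T (-1)))"
    unfolding nu_swap by (rule integral_distr[OF swap_meas[OF Km] Fm])
  also have "\<dots> = (\<integral>z. F (snd z, fst z) \<partial>nuK (T (-1)))" by (simp add: case_prod_beta)
  also have "\<dots> = (\<integral>y. \<integral>x. F (x, y) \<partial>T (-1) y \<partial>\<pi>)"
    using int_nuK(3)[OF Km i] by simp
  finally show "(\<integral>x. \<integral>y. F (x, y) \<partial>T 1 x \<partial>\<pi>) = (\<integral>y. \<integral>x. F (x, y) \<partial>T (-1) y \<partial>\<pi>)" .
qed

end

lemma jensen_alg:
  fixes I1 I2 m p q a b :: real
  assumes "m = I1 + p * a + q * b"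
  shows "I2 - 2 * m * I1 + m\<^sup>2 * (1 - p - q) + p * (a - m)\<^sup>2 + q * (b - m)\<^sup>2 = I2 + p * a\<^sup>2 + q * b\<^sup>2 - m\<^sup>2"
  unfolding assms by (simp add: power2_eq_square algebra_simps)

lemma jensen3:
  fixes h :: "'b \<Rightarrow> real"
  assumes M: "finite_measure M" and ih: "integrable M h" and ih2: "integrable M (\<lambda>y. (h y)\<^sup>2)"
    and p: "0 \<le> p" and q: "0 \<le> q" and s: "measure M (space M) + p + q = 1"
  shows "((\<integral>y. h y \<partial>M) + p * a + q * b)\<^sup>2 \<le> (\<integral>y. (h y)\<^sup>2 \<partial>M) + p * a\<^sup>2 + q * b\<^sup>2"
proof -
  interpret finite_measure M by (rule M)
  define m where "m = (\<integral>y. h y \<partial>M) + p * a + q * b"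
  define A where "A = measure M (space M)"
  have "(\<integral>y. (h y - m)\<^sup>2 \<partial>M) = (\<integral>y. (h y)\<^sup>2 - 2 * m * h y + m\<^sup>2 \<partial>M)"
    by (intro Bochner_Integration.integral_cong refl) (simp add: power2_eq_square algebra_simps)
  also have "\<dots> = (\<integral>y. (h y)\<^sup>2 \<partial>M) - 2 * m * (\<integral>y. h y \<partial>M) + m\<^sup>2 * A"
    using ih ih2 by (simp add: A_def)
  finally have e: "(\<integral>y. (h y - m)\<^sup>2 \<partial>M) = (\<integral>y. (h y)\<^sup>2 \<partial>M) - 2 * m * (\<integral>y. h y \<partial>M) + m\<^sup>2 * A" .
  have "0 \<le> (\<integral>y. (h y - m)\<^sup>2 \<partial>M)" by simp
  moreover have "0 \<le> p * (a - m)\<^sup>2" "0 \<le> q * (b - m)\<^sup>2" using p q by simp_all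
  moreover have "(\<integral>y. (h y - m)\<^sup>2 \<partial>M) + p * (a - m)\<^sup>2 + q * (b - m)\<^sup>2
      = (\<integral>y. (h y)\<^sup>2 \<partial>M) + p * a\<^sup>2 + q * b\<^sup>2 - m\<^sup>2"
  proof -
    have A: "A = 1 - p - q" using s A_def by simp
    show ?thesis unfolding e A using jensen_alg[OF m_def] by simp
  qed
  ultimately show ?thesis unfolding m_def by linarith
qed

context LK begin

lemma T_facts:
  assumes v: "v \<in> {-1,1}" and x: "x \<in> space \<pi>"
  shows "subprob_space (T v x)" "sets (T v x) = sets \<pi>" "space (T v x) = space \<pi>"
    "finite_measure (T v x)"
  using kernel_facts[OF TK[OF v] x] subprob_space.axioms(1) by auto

definition am :: "int \<Rightarrow> 'a \<Rightarrow> real" where "am v x = measure (T v x) (space \<pi>)"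

lemma am_bounds: "v \<in> {-1,1} \<Longrightarrow> x \<in> space \<pi> \<Longrightarrow> 0 \<le> am v x \<and> am v x \<le> 1"
  unfolding am_def using T_facts subprob_space.subprob_measure_le_1 by (metis measure_nonneg)

lemma am_meas: "v \<in> {-1,1} \<Longrightarrow> am v \<in> borel_measurable \<pi>"
  unfolding am_def
  by (rule measurable_compose[OF TK measurable_measure_subprob_algebra]) auto

lemma emeasure_T_space: "v \<in> {-1,1} \<Longrightarrow> x \<in> space \<pi> \<Longrightarrow> emeasure (T v x) (space \<pi>) = ennreal (am v x)"
  unfolding am_def using T_facts by (metis finite_measure.emeasure_eq_measure)

lemma nn_T_const:
  assumes "v \<in> {-1,1}" "x \<in> space \<pi>" "0 \<le> c"
  shows "(\<integral>\<^sup>+y. ennreal c \<partial>T v x) = ennreal (c * am v x)"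
proof -
  have "(\<integral>\<^sup>+y. ennreal c \<partial>T v x) = ennreal c * emeasure (T v x) (space (T v x))" by simp
  also have "\<dots> = ennreal c * ennreal (am v x)" using emeasure_T_space[OF assms(1,2)] T_facts[OF assms(1,2)] by simp
  also have "\<dots> = ennreal (c * am v x)" using assms(3) am_bounds[OF assms(1,2)] by (simp add: ennreal_mult)
  finally show ?thesis .
qed

lemma kernel_sq_right:
  fixes g :: "'a \<Rightarrow> real"
  assumes g: "g \<in> borel_measurable \<pi>" and v: "v \<in> {-1,1}"
  shows "(\<integral>\<^sup>+x. \<integral>\<^sup>+y. ennreal ((g y)\<^sup>2) \<partial>T v x \<partial>\<pi>) = (\<integral>\<^sup>+y. ennreal ((g y)\<^sup>2 * am (-v) y) \<partial>\<pi>)"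
proof -
  have F: "(\<lambda>z. ennreal ((g (snd z))\<^sup>2)) \<in> borel_measurable (\<pi> \<Otimes>\<^sub>M \<pi>)" using g by measurable
  have "(\<integral>\<^sup>+x. \<integral>\<^sup>+y. ennreal ((g y)\<^sup>2) \<partial>T v x \<partial>\<pi>) = (\<integral>\<^sup>+y. \<integral>\<^sup>+x. ennreal ((g y)\<^sup>2) \<partial>T (-v) y \<partial>\<pi>)"
    using DBn[OF F v] by simp
  also have "\<dots> = (\<integral>\<^sup>+y. ennreal ((g y)\<^sup>2 * am (-v) y) \<partial>\<pi>)"
  proof (rule nn_integral_cong)
    fix y assume "y \<in> space \<pi>"
    moreover have "-v \<in> {-1,1}" using v by auto
    ultimately show "(\<integral>\<^sup>+x. ennreal ((g y)\<^sup>2) \<partial>T (-v) y) = ennreal ((g y)\<^sup>2 * am (-v) y)"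
      by (intro nn_T_const) auto
  qed
  finally show ?thesis .
qed

lemma kernel_sq_left:
  fixes g :: "'a \<Rightarrow> real"
  assumes v: "v \<in> {-1,1}"
  shows "(\<integral>\<^sup>+x. \<integral>\<^sup>+y. ennreal ((g x)\<^sup>2) \<partial>T v x \<partial>\<pi>) = (\<integral>\<^sup>+x. ennreal ((g x)\<^sup>2 * am v x) \<partial>\<pi>)"
proof (rule nn_integral_cong)
  fix x assume "x \<in> space \<pi>"
  then show "(\<integral>\<^sup>+y. ennreal ((g x)\<^sup>2) \<partial>T v x) = ennreal ((g x)\<^sup>2 * am v x)"
    using v by (intro nn_T_const) auto
qed

lemma nn_le_sq:
  fixes g :: "'a \<Rightarrow> real"
  assumes "v \<in> {-1,1}"
  shows "(\<integral>\<^sup>+x. ennreal ((g x)\<^sup>2 * am v x) \<partial>\<pi>) \<le> (\<integral>\<^sup>+x. ennreal ((g x)\<^sup>2) \<partial>\<pi>)"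
  using am_bounds[OF assms]
  by (intro nn_integral_mono ennreal_leI) (simp add: mult_left_le)

lemma L2_nn_fin: "L2 \<pi> g \<Longrightarrow> (\<integral>\<^sup>+x. ennreal ((g x)\<^sup>2) \<partial>\<pi>) < \<infinity>"
  unfolding L2_def by (simp add: integrable_iff_bounded)

lemma AE_sq_int:
  assumes g: "L2 \<pi> g" and v: "v \<in> {-1,1}"
  shows "AE x in \<pi>. integrable (T v x) (\<lambda>y. (g y)\<^sup>2) \<and> integrable (T v x) g"
proof -
  have gm: "g \<in> borel_measurable \<pi>" using g by (simp add: L2_def)
  have "(\<integral>\<^sup>+x. \<integral>\<^sup>+y. ennreal ((g y)\<^sup>2) \<partial>T v x \<partial>\<pi>) \<le> (\<integral>\<^sup>+x. ennreal ((g x)\<^sup>2) \<partial>\<pi>)"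
    using kernel_sq_right[OF gm v] nn_le_sq[of "-v" g] v by (auto simp del: ennreal_le_iff)
  then have fin: "(\<integral>\<^sup>+x. \<integral>\<^sup>+y. ennreal ((g y)\<^sup>2) \<partial>T v x \<partial>\<pi>) \<noteq> \<infinity>"
    using L2_nn_fin[OF g] by (auto simp: top_unique)
  have F: "(\<lambda>(x, y). ennreal ((g y)\<^sup>2)) \<in> borel_measurable (\<pi> \<Otimes>\<^sub>M \<pi>)" using gm by measurable
  have "(\<lambda>x. \<integral>\<^sup>+y. ennreal ((g y)\<^sup>2) \<partial>T v x) \<in> borel_measurable \<pi>"
    using nn_integral_measurable_subprob_algebra2[where f="\<lambda>x y. ennreal ((g y)\<^sup>2)", OF F TK[OF v]] by simp
  from nn_integral_PInf_AE[OF this fin]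
  show ?thesis
  proof (rule AE_mp[OF _ AE_I2], intro impI)
    fix x assume x: "x \<in> space \<pi>" and f: "(\<integral>\<^sup>+y. ennreal ((g y)\<^sup>2) \<partial>T v x) \<noteq> \<infinity>"
    have gm': "g \<in> borel_measurable (T v x)" using gm T_facts[OF v x] by (simp cong: measurable_cong_sets)
    have i2: "integrable (T v x) (\<lambda>y. (g y)\<^sup>2)"
      using gm' f by (intro integrableI_nonneg) (auto simp: less_top)
    moreover have "integrable (T v x) g"
      using finite_measure.square_integrable_imp_integrable[OF T_facts(4)[OF v x] gm' i2] .
    ultimately show "integrable (T v x) (\<lambda>y. (g y)\<^sup>2) \<and> integrable (T v x) g" by simp
  qed
qed

lemma prod_int_nu:
  assumes u: "L2 \<pi> u" and g: "L2 \<pi> g" and v: "v \<in> {-1,1}"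
  shows "integrable (nuK (T v)) (\<lambda>z. u (fst z) * g (snd z))"
proof -
  have um: "u \<in> borel_measurable \<pi>" and gm: "g \<in> borel_measurable \<pi>" using u g by (auto simp: L2_def)
  have Fm: "(\<lambda>z. u (fst z) * g (snd z)) \<in> borel_measurable (nuK (T v))"
    using sets_nuK[OF TK[OF v]] um gm by (simp cong: measurable_cong_sets)
  have m1: "(\<lambda>z. ennreal ((u (fst z))\<^sup>2)) \<in> borel_measurable (\<pi> \<Otimes>\<^sub>M \<pi>)" using um by measurable
  have m2: "(\<lambda>z. ennreal ((g (snd z))\<^sup>2)) \<in> borel_measurable (\<pi> \<Otimes>\<^sub>M \<pi>)" using gm by measurable
  have m3: "(\<lambda>z. ennreal ((u (fst z))\<^sup>2) + ennreal ((g (snd z))\<^sup>2)) \<in> borel_measurable (\<pi> \<Otimes>\<^sub>M \<pi>)" using um gm by measurable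
  have "(\<integral>\<^sup>+z. ennreal (norm (u (fst z) * g (snd z))) \<partial>nuK (T v))
      \<le> (\<integral>\<^sup>+z. ennreal ((u (fst z))\<^sup>2) + ennreal ((g (snd z))\<^sup>2) \<partial>nuK (T v))"
  proof (rule nn_integral_mono)
    fix z
    have "\<bar>u (fst z) * g (snd z)\<bar> \<le> (u (fst z))\<^sup>2 + (g (snd z))\<^sup>2"
    proof -
      have "0 \<le> (\<bar>u (fst z)\<bar> - \<bar>g (snd z)\<bar>)\<^sup>2" by simp
      also have "(\<bar>u (fst z)\<bar> - \<bar>g (snd z)\<bar>)\<^sup>2 = (u (fst z))\<^sup>2 + (g (snd z))\<^sup>2 - 2 * \<bar>u (fst z) * g (snd z)\<bar>"
        by (simp add: power2_diff abs_mult mult.assoc)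
      finally show ?thesis by simp
    qed
    then show "ennreal (norm (u (fst z) * g (snd z))) \<le> ennreal ((u (fst z))\<^sup>2) + ennreal ((g (snd z))\<^sup>2)"
      by (simp add: ennreal_plus[symmetric] del: ennreal_plus)
  qed
  also have "\<dots> = (\<integral>\<^sup>+x. \<integral>\<^sup>+y. ennreal ((u x)\<^sup>2) + ennreal ((g y)\<^sup>2) \<partial>T v x \<partial>\<pi>)"
    using nn_nuK[OF TK[OF v] m3] by simp
  also have "\<dots> = (\<integral>\<^sup>+x. (\<integral>\<^sup>+y. ennreal ((u x)\<^sup>2) \<partial>T v x) + (\<integral>\<^sup>+y. ennreal ((g y)\<^sup>2) \<partial>T v x) \<partial>\<pi>)"
  proof (rule nn_integral_cong)
    fix x assume x: "x \<in> space \<pi>"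
    have gm': "g \<in> borel_measurable (T v x)" using gm T_facts[OF v x] by (simp cong: measurable_cong_sets)
    show "(\<integral>\<^sup>+y. ennreal ((u x)\<^sup>2) + ennreal ((g y)\<^sup>2) \<partial>T v x) = (\<integral>\<^sup>+y. ennreal ((u x)\<^sup>2) \<partial>T v x) + (\<integral>\<^sup>+y. ennreal ((g y)\<^sup>2) \<partial>T v x)"
      using gm' by (intro nn_integral_add) auto
  qed
  also have "\<dots> = (\<integral>\<^sup>+x. \<integral>\<^sup>+y. ennreal ((u x)\<^sup>2) \<partial>T v x \<partial>\<pi>) + (\<integral>\<^sup>+x. \<integral>\<^sup>+y. ennreal ((g y)\<^sup>2) \<partial>T v x \<partial>\<pi>)"
  proof (rule nn_integral_add)
    show "(\<lambda>x. \<integral>\<^sup>+y. ennreal ((u x)\<^sup>2) \<partial>T v x) \<in> borel_measurable \<pi>"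
      using nn_integral_measurable_subprob_algebra2[where f="\<lambda>x y. ennreal ((u x)\<^sup>2)", OF _ TK[OF v]] um by simp
    show "(\<lambda>x. \<integral>\<^sup>+y. ennreal ((g y)\<^sup>2) \<partial>T v x) \<in> borel_measurable \<pi>"
      using nn_integral_measurable_subprob_algebra2[where f="\<lambda>x y. ennreal ((g y)\<^sup>2)", OF _ TK[OF v]] gm by simp
  qed
  also have "\<dots> \<le> (\<integral>\<^sup>+x. ennreal ((u x)\<^sup>2) \<partial>\<pi>) + (\<integral>\<^sup>+x. ennreal ((g x)\<^sup>2) \<partial>\<pi>)"
  proof (intro add_mono)
    have mv: "-v \<in> {-1,1}" using v by auto
    show "(\<integral>\<^sup>+x. \<integral>\<^sup>+y. ennreal ((u x)\<^sup>2) \<partial>T v x \<partial>\<pi>) \<le> (\<integral>\<^sup>+x. ennreal ((u x)\<^sup>2) \<partial>\<pi>)"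
      using kernel_sq_left[OF v, of u] nn_le_sq[OF v, of u] by simp
    show "(\<integral>\<^sup>+x. \<integral>\<^sup>+y. ennreal ((g y)\<^sup>2) \<partial>T v x \<partial>\<pi>) \<le> (\<integral>\<^sup>+x. ennreal ((g x)\<^sup>2) \<partial>\<pi>)"
      using kernel_sq_right[OF gm v] nn_le_sq[OF mv, of g] by simp
  qed
  also have "\<dots> < \<infinity>" using L2_nn_fin[OF u] L2_nn_fin[OF g] by simp
  finally show ?thesis using Fm by (simp add: integrable_iff_bounded)
qed

lemma DB_prod1:
  assumes u: "L2 \<pi> u" and g: "L2 \<pi> g"
  shows "integrable \<pi> (\<lambda>x. u x * (\<integral>y. g y \<partial>T 1 x))"
    "(\<integral>x. u x * (\<integral>y. g y \<partial>T 1 x) \<partial>\<pi>) = (\<integral>y. g y * (\<integral>x. u x \<partial>T (-1) y) \<partial>\<pi>)"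
proof -
  have I: "integrable (nuK (T 1)) (\<lambda>z. u (fst z) * g (snd z))" using prod_int_nu[OF u g] by simp
  show "integrable \<pi> (\<lambda>x. u x * (\<integral>y. g y \<partial>T 1 x))"
    using int_nuK(2)[OF K1 I] by simp
  show "(\<integral>x. u x * (\<integral>y. g y \<partial>T 1 x) \<partial>\<pi>) = (\<integral>y. g y * (\<integral>x. u x \<partial>T (-1) y) \<partial>\<pi>)"
    using DBr1(2)[OF I] by (simp add: mult.commute)
qed

lemma DB_prod:
  assumes u: "L2 \<pi> u" and g: "L2 \<pi> g" and v: "v \<in> {-1,1}"
  shows "integrable \<pi> (\<lambda>x. u x * (\<integral>y. g y \<partial>T v x))"
    "(\<integral>x. u x * (\<integral>y. g y \<partial>T v x) \<partial>\<pi>) = (\<integral>y. g y * (\<integral>x. u x \<partial>T (-v) y) \<partial>\<pi>)"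
proof -
  have I: "integrable (nuK (T v)) (\<lambda>z. u (fst z) * g (snd z))" using prod_int_nu[OF u g v] by simp
  show "integrable \<pi> (\<lambda>x. u x * (\<integral>y. g y \<partial>T v x))"
    using int_nuK(2)[OF TK[OF v] I] by simp
  show "(\<integral>x. u x * (\<integral>y. g y \<partial>T v x) \<partial>\<pi>) = (\<integral>y. g y * (\<integral>x. u x \<partial>T (-v) y) \<partial>\<pi>)"
  proof (cases "v = 1")
    case True then show ?thesis using DB_prod1(2)[OF u g] by simp
  next
    case False
    then have "v = -1" using v by auto
    then show ?thesis using DB_prod1(2)[OF g u] by simp
  qed
qed

end

context LK begin

definition pp :: "(int \<Rightarrow> 'a \<Rightarrow> real) \<Rightarrow> int \<Rightarrow> 'a \<Rightarrow> real" where
  "pp \<rho> v x = 1 - am v x - \<rho> v x"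

lemma sr_facts:
  assumes sr: "switching_rate \<pi> T \<rho>" and v: "v \<in> {-1,1}" and x: "x \<in> space \<pi>"
  shows "0 \<le> \<rho> v x" "\<rho> v x \<le> 1 - am v x" "\<rho> v x - \<rho> (-v) x = am (-v) x - am v x"
    "0 \<le> pp \<rho> v x" "pp \<rho> v x \<le> 1" "pp \<rho> (-v) x = pp \<rho> v x" "\<rho> v x \<le> 1"
    "am v x + pp \<rho> v x + \<rho> v x = 1"
proof -
  have mv: "-v \<in> {-1,1}" using v by auto
  have *: "\<And>w. w \<in> {-1,1} \<Longrightarrow> 0 \<le> \<rho> w x \<and> \<rho> w x \<le> 1 - am w x \<and> \<rho> w x - \<rho> (-w) x = am (-w) x - am w x"
    using sr x unfolding switching_rate_def am_def by blast
  show "0 \<le> \<rho> v x" "\<rho> v x \<le> 1 - am v x" "\<rho> v x - \<rho> (-v) x = am (-v) x - am v x" using *[OF v] by auto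
  show "0 \<le> pp \<rho> v x" using *[OF v] by (simp add: pp_def)
  show "pp \<rho> v x \<le> 1" using *[OF v] am_bounds[OF v x] by (simp add: pp_def)
  show "pp \<rho> (-v) x = pp \<rho> v x" using *[OF v] by (simp add: pp_def)
  show "\<rho> v x \<le> 1" using *[OF v] am_bounds[OF v x] by simp
  show "am v x + pp \<rho> v x + \<rho> v x = 1" by (simp add: pp_def)
qed

lemma sr_meas: "switching_rate \<pi> T \<rho> \<Longrightarrow> v \<in> {-1,1} \<Longrightarrow> \<rho> v \<in> borel_measurable \<pi>"
  unfolding switching_rate_def by blast

lemma pp_meas: "switching_rate \<pi> T \<rho> \<Longrightarrow> v \<in> {-1,1} \<Longrightarrow> pp \<rho> v \<in> borel_measurable \<pi>"
  unfolding pp_def using sr_meas am_meas by measurable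

lemma lifted_slice:
  "lifted_op \<pi> T \<rho> g (x, v) = (\<integral>y. g (y, v) \<partial>T v x) + pp \<rho> v x * g (x, v) + \<rho> v x * g (x, -v)"
  unfolding lifted_op_def pp_def am_def by (simp add: algebra_simps)

lemma Tint_meas:
  fixes g :: "'a \<times> int \<Rightarrow> real"
  assumes g: "g \<in> borel_measurable mu" and v: "v \<in> {-1,1}"
  shows "(\<lambda>x. \<integral>y. g (y, v) \<partial>T v x) \<in> borel_measurable \<pi>"
  by (rule measurable_compose[OF TK[OF v] integral_measurable_subprob_algebra[OF slice_meas[OF g v]]])

lemma P_slice_meas:
  assumes sr: "switching_rate \<pi> T \<rho>" and g: "g \<in> borel_measurable mu" and v: "v \<in> {-1,1}"
  shows "(\<lambda>x. lifted_op \<pi> T \<rho> g (x, v)) \<in> borel_measurable \<pi>"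
proof -
  have mv: "-v \<in> {-1,1}" using v by auto
  have a: "(\<lambda>x. \<integral>y. g (y, v) \<partial>T v x) \<in> borel_measurable \<pi>" by (rule Tint_meas[OF g v])
  have b: "pp \<rho> v \<in> borel_measurable \<pi>" "\<rho> v \<in> borel_measurable \<pi>" using pp_meas[OF sr v] sr_meas[OF sr v] by auto
  have c: "(\<lambda>x. g (x, v)) \<in> borel_measurable \<pi>" "(\<lambda>x. g (x, -v)) \<in> borel_measurable \<pi>"
    using slice_meas[OF g v] slice_meas[OF g mv] by auto
  show ?thesis unfolding lifted_slice using a b c by measurable
qed

lemma P_meas:
  assumes sr: "switching_rate \<pi> T \<rho>" and g: "g \<in> borel_measurable mu"
  shows "lifted_op \<pi> T \<rho> g \<in> borel_measurable mu"
  by (rule meas_from_slices) (use P_slice_meas[OF sr g] in auto)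

lemma L2_slice: "L2 mu g \<Longrightarrow> v \<in> {-1,1} \<Longrightarrow> L2 \<pi> (\<lambda>x. g (x, v))"
  using L2_mu_iff by auto

lemma P_slice_bound:
  assumes sr: "switching_rate \<pi> T \<rho>" and g: "L2 mu g" and v: "v \<in> {-1,1}"
  shows "(\<integral>\<^sup>+x. ennreal ((lifted_op \<pi> T \<rho> g (x, v))\<^sup>2) \<partial>\<pi>) \<le>
    (\<integral>\<^sup>+x. ennreal ((g (x, v))\<^sup>2 * am (-v) x) \<partial>\<pi>) + (\<integral>\<^sup>+x. ennreal (pp \<rho> v x * (g (x, v))\<^sup>2) \<partial>\<pi>)
    + (\<integral>\<^sup>+x. ennreal (\<rho> v x * (g (x, -v))\<^sup>2) \<partial>\<pi>)"
proof -
  have mv: "-v \<in> {-1,1}" using v by auto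
  have gv: "L2 \<pi> (\<lambda>x. g (x, v))" using L2_slice[OF g v] .
  have gvm: "(\<lambda>x. g (x, v)) \<in> borel_measurable \<pi>" "(\<lambda>x. g (x, -v)) \<in> borel_measurable \<pi>"
    using L2_slice[OF g v] L2_slice[OF g mv] by (auto simp: L2_def)
  have b: "pp \<rho> v \<in> borel_measurable \<pi>" "\<rho> v \<in> borel_measurable \<pi>" using pp_meas[OF sr v] sr_meas[OF sr v] by auto
  have m1: "(\<lambda>x. \<integral>\<^sup>+y. ennreal ((g (y, v))\<^sup>2) \<partial>T v x) \<in> borel_measurable \<pi>"
    using nn_integral_measurable_subprob_algebra2[where f="\<lambda>x y. ennreal ((g (y, v))\<^sup>2)", OF _ TK[OF v]] gvm by simp
  have m2: "(\<lambda>x. ennreal (pp \<rho> v x * (g (x, v))\<^sup>2)) \<in> borel_measurable \<pi>" using b gvm by measurable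
  have m3: "(\<lambda>x. ennreal (\<rho> v x * (g (x, -v))\<^sup>2)) \<in> borel_measurable \<pi>" using b gvm by measurable
  have "(\<integral>\<^sup>+x. ennreal ((lifted_op \<pi> T \<rho> g (x, v))\<^sup>2) \<partial>\<pi>) \<le>
      (\<integral>\<^sup>+x. (\<integral>\<^sup>+y. ennreal ((g (y, v))\<^sup>2) \<partial>T v x) + ennreal (pp \<rho> v x * (g (x, v))\<^sup>2)
            + ennreal (\<rho> v x * (g (x, -v))\<^sup>2) \<partial>\<pi>)"
  proof (rule nn_integral_mono_AE)
    show "AE x in \<pi>. ennreal ((lifted_op \<pi> T \<rho> g (x, v))\<^sup>2) \<le>
      (\<integral>\<^sup>+y. ennreal ((g (y, v))\<^sup>2) \<partial>T v x) + ennreal (pp \<rho> v x * (g (x, v))\<^sup>2) + ennreal (\<rho> v x * (g (x, -v))\<^sup>2)"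
      using AE_sq_int[OF gv v] AE_space
    proof eventually_elim
      case (elim x)
      then have i2: "integrable (T v x) (\<lambda>y. (g (y, v))\<^sup>2)" and i1: "integrable (T v x) (\<lambda>y. g (y, v))"
        and x: "x \<in> space \<pi>" by auto
      have s: "measure (T v x) (space (T v x)) + pp \<rho> v x + \<rho> v x = 1"
        using sr_facts(8)[OF sr v x] T_facts(3)[OF v x] by (simp add: am_def)
      have "((\<integral>y. g (y, v) \<partial>T v x) + pp \<rho> v x * g (x, v) + \<rho> v x * g (x, -v))\<^sup>2
          \<le> (\<integral>y. (g (y, v))\<^sup>2 \<partial>T v x) + pp \<rho> v x * (g (x, v))\<^sup>2 + \<rho> v x * (g (x, -v))\<^sup>2"
        by (rule jensen3[OF T_facts(4)[OF v x] i1 i2 sr_facts(4)[OF sr v x] sr_facts(1)[OF sr v x] s])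
      then have "ennreal ((lifted_op \<pi> T \<rho> g (x, v))\<^sup>2) \<le>
          ennreal ((\<integral>y. (g (y, v))\<^sup>2 \<partial>T v x) + pp \<rho> v x * (g (x, v))\<^sup>2 + \<rho> v x * (g (x, -v))\<^sup>2)"
        unfolding lifted_slice by (rule ennreal_leI)
      also have "\<dots> = ennreal (\<integral>y. (g (y, v))\<^sup>2 \<partial>T v x) + ennreal (pp \<rho> v x * (g (x, v))\<^sup>2) + ennreal (\<rho> v x * (g (x, -v))\<^sup>2)"
        using sr_facts(1,4)[OF sr v x] by (simp add: ennreal_plus integral_nonneg)
      also have "ennreal (\<integral>y. (g (y, v))\<^sup>2 \<partial>T v x) = (\<integral>\<^sup>+y. ennreal ((g (y, v))\<^sup>2) \<partial>T v x)"
        using i2 by (simp add: nn_integral_eq_integral)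
      finally show ?case .
    qed
  qed
  also have "\<dots> = (\<integral>\<^sup>+x. \<integral>\<^sup>+y. ennreal ((g (y, v))\<^sup>2) \<partial>T v x \<partial>\<pi>) + (\<integral>\<^sup>+x. ennreal (pp \<rho> v x * (g (x, v))\<^sup>2) \<partial>\<pi>)
    + (\<integral>\<^sup>+x. ennreal (\<rho> v x * (g (x, -v))\<^sup>2) \<partial>\<pi>)"
    using m1 m2 m3 by (simp add: nn_integral_add)
  also have "(\<integral>\<^sup>+x. \<integral>\<^sup>+y. ennreal ((g (y, v))\<^sup>2) \<partial>T v x \<partial>\<pi>) = (\<integral>\<^sup>+x. ennreal ((g (x, v))\<^sup>2 * am (-v) x) \<partial>\<pi>)"
    using kernel_sq_right[OF gvm(1) v] by simp
  finally show ?thesis .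
qed

lemma bracket3:
  fixes a b c :: "'a \<Rightarrow> real"
  assumes m: "a \<in> borel_measurable \<pi>" "b \<in> borel_measurable \<pi>" "c \<in> borel_measurable \<pi>"
    and n: "\<And>x. x \<in> space \<pi> \<Longrightarrow> 0 \<le> a x \<and> 0 \<le> b x \<and> 0 \<le> c x"
  shows "(\<integral>\<^sup>+x. ennreal (a x) \<partial>\<pi>) + (\<integral>\<^sup>+x. ennreal (b x) \<partial>\<pi>) + (\<integral>\<^sup>+x. ennreal (c x) \<partial>\<pi>)
    = (\<integral>\<^sup>+x. ennreal (a x + b x + c x) \<partial>\<pi>)"
proof -
  have "(\<integral>\<^sup>+x. ennreal (a x) \<partial>\<pi>) + (\<integral>\<^sup>+x. ennreal (b x) \<partial>\<pi>) + (\<integral>\<^sup>+x. ennreal (c x) \<partial>\<pi>)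
     = (\<integral>\<^sup>+x. ennreal (a x) + ennreal (b x) + ennreal (c x) \<partial>\<pi>)"
    using m by (simp add: nn_integral_add)
  also have "\<dots> = (\<integral>\<^sup>+x. ennreal (a x + b x + c x) \<partial>\<pi>)"
    using n by (intro nn_integral_cong) (simp add: ennreal_plus)
  finally show ?thesis .
qed

lemma ip_self_slices: "L2 mu g \<Longrightarrow> ip g g = ((\<integral>x. (g (x, 1))\<^sup>2 \<partial>\<pi>) + (\<integral>x. (g (x, -1))\<^sup>2 \<partial>\<pi>)) / 2"
  using ip_slices[of g g] by (simp add: power2_eq_square)

lemma P_L2:
  assumes sr: "switching_rate \<pi> T \<rho>" and g: "L2 mu g"
  shows "L2 mu (lifted_op \<pi> T \<rho> g)" "ip (lifted_op \<pi> T \<rho> g) (lifted_op \<pi> T \<rho> g) \<le> ip g g"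
proof -
  let ?P = "lifted_op \<pi> T \<rho> g"
  have v1: "(1::int) \<in> {-1,1}" and v2: "(-1::int) \<in> {-1,1}" by auto
  have g1: "L2 \<pi> (\<lambda>x. g (x, 1))" and g2: "L2 \<pi> (\<lambda>x. g (x, -1))" using L2_mu_iff g by auto
  have gm1: "(\<lambda>x. g (x, 1)) \<in> borel_measurable \<pi>" and gm2: "(\<lambda>x. g (x, -1)) \<in> borel_measurable \<pi>"
    using g1 g2 by (auto simp: L2_def)
  have gm: "g \<in> borel_measurable mu" using g by (simp add: L2_def)
  have am1: "am 1 \<in> borel_measurable \<pi>" and am2: "am (-1) \<in> borel_measurable \<pi>" using am_meas by auto
  have pm: "pp \<rho> 1 \<in> borel_measurable \<pi>" "pp \<rho> (-1) \<in> borel_measurable \<pi>"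
     "\<rho> 1 \<in> borel_measurable \<pi>" "\<rho> (-1) \<in> borel_measurable \<pi>"
    using pp_meas[OF sr] sr_meas[OF sr] by auto
  define G1 where "G1 = (\<integral>\<^sup>+x. ennreal ((g (x, 1))\<^sup>2) \<partial>\<pi>)"
  define G2 where "G2 = (\<integral>\<^sup>+x. ennreal ((g (x, -1))\<^sup>2) \<partial>\<pi>)"
  define N1 where "N1 = (\<integral>\<^sup>+x. ennreal ((?P (x, 1))\<^sup>2) \<partial>\<pi>)"
  define N2 where "N2 = (\<integral>\<^sup>+x. ennreal ((?P (x, -1))\<^sup>2) \<partial>\<pi>)"
  define A1 where "A1 = (\<integral>\<^sup>+x. ennreal ((g (x, 1))\<^sup>2 * am (-1) x) \<partial>\<pi>)"
  define B1 where "B1 = (\<integral>\<^sup>+x. ennreal (pp \<rho> 1 x * (g (x, 1))\<^sup>2) \<partial>\<pi>)"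
  define C1 where "C1 = (\<integral>\<^sup>+x. ennreal (\<rho> 1 x * (g (x, -1))\<^sup>2) \<partial>\<pi>)"
  define A2 where "A2 = (\<integral>\<^sup>+x. ennreal ((g (x, -1))\<^sup>2 * am 1 x) \<partial>\<pi>)"
  define B2 where "B2 = (\<integral>\<^sup>+x. ennreal (pp \<rho> (-1) x * (g (x, -1))\<^sup>2) \<partial>\<pi>)"
  define C2 where "C2 = (\<integral>\<^sup>+x. ennreal (\<rho> (-1) x * (g (x, 1))\<^sup>2) \<partial>\<pi>)"
  have b1: "N1 \<le> A1 + B1 + C1" using P_slice_bound[OF sr g v1] by (simp add: N1_def A1_def B1_def C1_def)
  have b2: "N2 \<le> A2 + B2 + C2" using P_slice_bound[OF sr g v2] by (simp add: N2_def A2_def B2_def C2_def)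
  have e1: "A1 + B1 + C2 = G1"
  proof -
    have "A1 + B1 + C2 = (\<integral>\<^sup>+x. ennreal ((g (x, 1))\<^sup>2 * am (-1) x + pp \<rho> 1 x * (g (x, 1))\<^sup>2 + \<rho> (-1) x * (g (x, 1))\<^sup>2) \<partial>\<pi>)"
      unfolding A1_def B1_def C2_def
      by (rule bracket3) (use gm1 am2 pm am_bounds sr_facts(1,4)[OF sr] in auto)
    also have "\<dots> = G1" unfolding G1_def
    proof (rule nn_integral_cong)
      fix x assume x: "x \<in> space \<pi>"
      have "am (-1) x + pp \<rho> 1 x + \<rho> (-1) x = 1"
        using sr_facts(6,8)[OF sr v2 x] by simp
      then have "(g (x, 1))\<^sup>2 * am (-1) x + pp \<rho> 1 x * (g (x, 1))\<^sup>2 + \<rho> (-1) x * (g (x, 1))\<^sup>2 = (g (x, 1))\<^sup>2"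
        by (metis distrib_left mult.commute mult_1_right)
      then show "ennreal ((g (x, 1))\<^sup>2 * am (-1) x + pp \<rho> 1 x * (g (x, 1))\<^sup>2 + \<rho> (-1) x * (g (x, 1))\<^sup>2) = ennreal ((g (x, 1))\<^sup>2)"
        by simp
    qed
    finally show ?thesis .
  qed
  have e2: "A2 + B2 + C1 = G2"
  proof -
    have "A2 + B2 + C1 = (\<integral>\<^sup>+x. ennreal ((g (x, -1))\<^sup>2 * am 1 x + pp \<rho> (-1) x * (g (x, -1))\<^sup>2 + \<rho> 1 x * (g (x, -1))\<^sup>2) \<partial>\<pi>)"
      unfolding A2_def B2_def C1_def
      by (rule bracket3) (use gm2 am1 pm am_bounds sr_facts(1,4)[OF sr] in auto)
    also have "\<dots> = G2" unfolding G2_def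
    proof (rule nn_integral_cong)
      fix x assume x: "x \<in> space \<pi>"
      have "am 1 x + pp \<rho> (-1) x + \<rho> 1 x = 1"
        using sr_facts(6,8)[OF sr v1 x] by simp
      then have "(g (x, -1))\<^sup>2 * am 1 x + pp \<rho> (-1) x * (g (x, -1))\<^sup>2 + \<rho> 1 x * (g (x, -1))\<^sup>2 = (g (x, -1))\<^sup>2"
        by (metis distrib_left mult.commute mult_1_right)
      then show "ennreal ((g (x, -1))\<^sup>2 * am 1 x + pp \<rho> (-1) x * (g (x, -1))\<^sup>2 + \<rho> 1 x * (g (x, -1))\<^sup>2) = ennreal ((g (x, -1))\<^sup>2)"
        by simp
    qed
    finally show ?thesis .
  qed
  have NG: "N1 + N2 \<le> G1 + G2"
  proof -
    have "N1 + N2 \<le> (A1 + B1 + C1) + (A2 + B2 + C2)" using b1 b2 by (rule add_mono)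
    also have "\<dots> = (A1 + B1 + C2) + (A2 + B2 + C1)" by (simp add: ac_simps)
    finally show ?thesis using e1 e2 by simp
  qed
  have Gfin: "G1 + G2 < \<infinity>" using L2_nn_fin[OF g1] L2_nn_fin[OF g2] by (simp add: G1_def G2_def)
  have "N1 + N2 < \<infinity>" using NG Gfin by (rule le_less_trans)
  then have N1fin: "N1 < \<infinity>" and N2fin: "N2 < \<infinity>" by (simp_all add: ennreal_add_less_top)
  have Pm1: "(\<lambda>x. ?P (x, 1)) \<in> borel_measurable \<pi>" and Pm2: "(\<lambda>x. ?P (x, -1)) \<in> borel_measurable \<pi>"
    using P_slice_meas[OF sr gm] by auto
  have i1: "integrable \<pi> (\<lambda>x. (?P (x, 1))\<^sup>2)" using Pm1 N1fin unfolding N1_def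
    by (intro integrableI_nonneg) auto
  have i2: "integrable \<pi> (\<lambda>x. (?P (x, -1))\<^sup>2)" using Pm2 N2fin unfolding N2_def
    by (intro integrableI_nonneg) auto
  show L: "L2 mu ?P" unfolding L2_mu_iff using Pm1 Pm2 i1 i2 by (simp add: L2_def)
  have "ennreal ((\<integral>x. (?P (x, 1))\<^sup>2 \<partial>\<pi>) + (\<integral>x. (?P (x, -1))\<^sup>2 \<partial>\<pi>)) = N1 + N2"
    using i1 i2 unfolding N1_def N2_def by (simp add: nn_integral_eq_integral ennreal_plus integral_nonneg)
  also have "\<dots> \<le> G1 + G2" by (rule NG)
  also have "\<dots> = ennreal ((\<integral>x. (g (x, 1))\<^sup>2 \<partial>\<pi>) + (\<integral>x. (g (x, -1))\<^sup>2 \<partial>\<pi>))"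
    using g1 g2 unfolding G1_def G2_def L2_def by (simp add: nn_integral_eq_integral ennreal_plus integral_nonneg)
  finally have le: "ennreal ((\<integral>x. (?P (x, 1))\<^sup>2 \<partial>\<pi>) + (\<integral>x. (?P (x, -1))\<^sup>2 \<partial>\<pi>)) \<le> ennreal ((\<integral>x. (g (x, 1))\<^sup>2 \<partial>\<pi>) + (\<integral>x. (g (x, -1))\<^sup>2 \<partial>\<pi>))" .
  have nn: "0 \<le> (\<integral>x. (g (x, 1))\<^sup>2 \<partial>\<pi>) + (\<integral>x. (g (x, -1))\<^sup>2 \<partial>\<pi>)"
    by (simp add: integral_nonneg add_nonneg_nonneg)
  have "(\<integral>x. (?P (x, 1))\<^sup>2 \<partial>\<pi>) + (\<integral>x. (?P (x, -1))\<^sup>2 \<partial>\<pi>) \<le> (\<integral>x. (g (x, 1))\<^sup>2 \<partial>\<pi>) + (\<integral>x. (g (x, -1))\<^sup>2 \<partial>\<pi>)"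
    using le ennreal_le_iff[OF nn] by blast
  then show "ip ?P ?P \<le> ip g g" using ip_self_slices[OF L] ip_self_slices[OF g] by simp
qed

end

context LK begin

definition Qop :: "('a \<times> int \<Rightarrow> real) \<Rightarrow> ('a \<times> int \<Rightarrow> real)" where
  "Qop g = (\<lambda>z. g (fst z, - snd z))"

lemma Qop_apply[simp]: "Qop g (x, v) = g (x, -v)" by (simp add: Qop_def)

lemma Qop_Qop[simp]: "Qop (Qop g) = g" by (simp add: Qop_def)

lemma Q_L2: "L2 mu g \<Longrightarrow> L2 mu (Qop g)"
  unfolding L2_mu_iff by simp

lemma ip_Q: assumes "L2 mu u" "L2 mu w" shows "ip (Qop u) w = ip u (Qop w)"
  using ip_slices[OF Q_L2[OF assms(1)] assms(2)] ip_slices[OF assms(1) Q_L2[OF assms(2)]]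
  by (simp add: add.commute mult.commute)

lemma pp_abs: "switching_rate \<pi> T \<rho> \<Longrightarrow> v \<in> {-1,1} \<Longrightarrow> x \<in> space \<pi> \<Longrightarrow> \<bar>pp \<rho> v x\<bar> \<le> 1"
  using sr_facts(4,5) by (metis abs_of_nonneg)

lemma rho_abs: "switching_rate \<pi> T \<rho> \<Longrightarrow> v \<in> {-1,1} \<Longrightarrow> x \<in> space \<pi> \<Longrightarrow> \<bar>\<rho> v x\<bar> \<le> 1"
  using sr_facts(1,7) by (metis abs_of_nonneg)

lemma ip_P_slice:
  assumes sr: "switching_rate \<pi> T \<rho>" and a: "L2 \<pi> a" and g: "L2 mu g" and v: "v \<in> {-1,1}"
  shows "(\<integral>x. a x * lifted_op \<pi> T \<rho> g (x, v) \<partial>\<pi>) =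
     (\<integral>x. a x * (\<integral>y. g (y, v) \<partial>T v x) \<partial>\<pi>) + (\<integral>x. (pp \<rho> v x * a x) * g (x, v) \<partial>\<pi>)
     + (\<integral>x. (\<rho> v x * a x) * g (x, -v) \<partial>\<pi>)"
proof -
  have mv: "-v \<in> {-1,1}" using v by auto
  have gv: "L2 \<pi> (\<lambda>x. g (x, v))" and gmv: "L2 \<pi> (\<lambda>x. g (x, -v))"
    using L2_slice[OF g v] L2_slice[OF g mv] by auto
  have i1: "integrable \<pi> (\<lambda>x. a x * (\<integral>y. g (y, v) \<partial>T v x))" by (rule DB_prod(1)[OF a gv v])
  have l2: "L2 \<pi> (\<lambda>x. pp \<rho> v x * a x)"
    by (rule L2_mult_bounded[OF a pp_meas[OF sr v] pp_abs[OF sr v]])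
  have l3: "L2 \<pi> (\<lambda>x. \<rho> v x * a x)"
    by (rule L2_mult_bounded[OF a sr_meas[OF sr v] rho_abs[OF sr v]])
  have i2: "integrable \<pi> (\<lambda>x. (pp \<rho> v x * a x) * g (x, v))" by (rule L2_prod_int[OF l2 gv])
  have i3: "integrable \<pi> (\<lambda>x. (\<rho> v x * a x) * g (x, -v))" by (rule L2_prod_int[OF l3 gmv])
  have "(\<integral>x. a x * lifted_op \<pi> T \<rho> g (x, v) \<partial>\<pi>) =
     (\<integral>x. a x * (\<integral>y. g (y, v) \<partial>T v x) + (pp \<rho> v x * a x) * g (x, v) + (\<rho> v x * a x) * g (x, -v) \<partial>\<pi>)"
    unfolding lifted_slice by (simp add: algebra_simps)
  also have "\<dots> = (\<integral>x. a x * (\<integral>y. g (y, v) \<partial>T v x) \<partial>\<pi>) + (\<integral>x. (pp \<rho> v x * a x) * g (x, v) \<partial>\<pi>)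
     + (\<integral>x. (\<rho> v x * a x) * g (x, -v) \<partial>\<pi>)"
    using i1 i2 i3 by simp
  finally show ?thesis .
qed

lemma P_adj:
  assumes sr: "switching_rate \<pi> T \<rho>" and u: "L2 mu u" and g: "L2 mu g"
  shows "ip u (lifted_op \<pi> T \<rho> g) = ip (Qop (lifted_op \<pi> T \<rho> (Qop u))) g"
proof -
  let ?P = "lifted_op \<pi> T \<rho>"
  have v1: "(1::int) \<in> {-1,1}" and v2: "(-1::int) \<in> {-1,1}" by auto
  have u1: "L2 \<pi> (\<lambda>x. u (x, 1))" and u2: "L2 \<pi> (\<lambda>x. u (x, -1))" using L2_mu_iff u by auto
  have g1: "L2 \<pi> (\<lambda>x. g (x, 1))" and g2: "L2 \<pi> (\<lambda>x. g (x, -1))" using L2_mu_iff g by auto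
  have PL: "L2 mu (?P g)" by (rule P_L2(1)[OF sr g])
  have PQL: "L2 mu (Qop (?P (Qop u)))" by (rule Q_L2[OF P_L2(1)[OF sr Q_L2[OF u]]])
  have L: "ip u (?P g) = ((\<integral>x. u (x, 1) * ?P g (x, 1) \<partial>\<pi>) + (\<integral>x. u (x, -1) * ?P g (x, -1) \<partial>\<pi>)) / 2"
    by (rule ip_slices[OF u PL])
  have R: "ip (Qop (?P (Qop u))) g = ((\<integral>x. g (x, 1) * ?P (Qop u) (x, -1) \<partial>\<pi>) + (\<integral>x. g (x, -1) * ?P (Qop u) (x, 1) \<partial>\<pi>)) / 2"
    using ip_slices[OF PQL g] by (simp add: mult.commute)
  have L1: "(\<integral>x. u (x, 1) * ?P g (x, 1) \<partial>\<pi>) = (\<integral>x. u (x, 1) * (\<integral>y. g (y, 1) \<partial>T 1 x) \<partial>\<pi>)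
      + (\<integral>x. (pp \<rho> 1 x * u (x, 1)) * g (x, 1) \<partial>\<pi>) + (\<integral>x. (\<rho> 1 x * u (x, 1)) * g (x, -1) \<partial>\<pi>)"
    using ip_P_slice[OF sr u1 g v1] by simp
  have L2': "(\<integral>x. u (x, -1) * ?P g (x, -1) \<partial>\<pi>) = (\<integral>x. u (x, -1) * (\<integral>y. g (y, -1) \<partial>T (-1) x) \<partial>\<pi>)
      + (\<integral>x. (pp \<rho> (-1) x * u (x, -1)) * g (x, -1) \<partial>\<pi>) + (\<integral>x. (\<rho> (-1) x * u (x, -1)) * g (x, 1) \<partial>\<pi>)"
    using ip_P_slice[OF sr u2 g v2] by simp
  have R1: "(\<integral>x. g (x, 1) * ?P (Qop u) (x, -1) \<partial>\<pi>) = (\<integral>x. g (x, 1) * (\<integral>y. u (y, 1) \<partial>T (-1) x) \<partial>\<pi>)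
      + (\<integral>x. (pp \<rho> (-1) x * g (x, 1)) * u (x, 1) \<partial>\<pi>) + (\<integral>x. (\<rho> (-1) x * g (x, 1)) * u (x, -1) \<partial>\<pi>)"
    using ip_P_slice[OF sr g1 Q_L2[OF u] v2] by simp
  have R2: "(\<integral>x. g (x, -1) * ?P (Qop u) (x, 1) \<partial>\<pi>) = (\<integral>x. g (x, -1) * (\<integral>y. u (y, -1) \<partial>T 1 x) \<partial>\<pi>)
      + (\<integral>x. (pp \<rho> 1 x * g (x, -1)) * u (x, -1) \<partial>\<pi>) + (\<integral>x. (\<rho> 1 x * g (x, -1)) * u (x, 1) \<partial>\<pi>)"
    using ip_P_slice[OF sr g2 Q_L2[OF u] v1] by simp
  have T1: "(\<integral>x. u (x, 1) * (\<integral>y. g (y, 1) \<partial>T 1 x) \<partial>\<pi>) = (\<integral>x. g (x, 1) * (\<integral>y. u (y, 1) \<partial>T (-1) x) \<partial>\<pi>)"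
    using DB_prod(2)[OF u1 g1 v1] by simp
  have T2: "(\<integral>x. u (x, -1) * (\<integral>y. g (y, -1) \<partial>T (-1) x) \<partial>\<pi>) = (\<integral>x. g (x, -1) * (\<integral>y. u (y, -1) \<partial>T 1 x) \<partial>\<pi>)"
    using DB_prod(2)[OF u2 g2 v2] by simp
  have D1: "(\<integral>x. (pp \<rho> 1 x * u (x, 1)) * g (x, 1) \<partial>\<pi>) = (\<integral>x. (pp \<rho> (-1) x * g (x, 1)) * u (x, 1) \<partial>\<pi>)"
    using sr_facts(6)[OF sr v1] by (intro Bochner_Integration.integral_cong refl) (simp add: mult.commute mult.left_commute)
  have D2: "(\<integral>x. (pp \<rho> (-1) x * u (x, -1)) * g (x, -1) \<partial>\<pi>) = (\<integral>x. (pp \<rho> 1 x * g (x, -1)) * u (x, -1) \<partial>\<pi>)"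
    using sr_facts(6)[OF sr v1] by (intro Bochner_Integration.integral_cong refl) (simp add: mult.commute mult.left_commute)
  have X1: "(\<integral>x. (\<rho> 1 x * u (x, 1)) * g (x, -1) \<partial>\<pi>) = (\<integral>x. (\<rho> 1 x * g (x, -1)) * u (x, 1) \<partial>\<pi>)"
    by (simp add: mult.commute mult.left_commute)
  have X2: "(\<integral>x. (\<rho> (-1) x * u (x, -1)) * g (x, 1) \<partial>\<pi>) = (\<integral>x. (\<rho> (-1) x * g (x, 1)) * u (x, -1) \<partial>\<pi>)"
    by (simp add: mult.commute mult.left_commute)
  show ?thesis unfolding L R L1 L2' R1 R2 T1 T2 D1 D2 X1 X2 by simp
qed

lemma P_scale: "lifted_op \<pi> T \<rho> (\<lambda>z. c * g z) = (\<lambda>z. c * lifted_op \<pi> T \<rho> g z)"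
  unfolding lifted_op_def by (auto simp: fun_eq_iff algebra_simps)

lemma P_sum_AE:
  assumes K: "finite K" and g: "\<And>k. k \<in> K \<Longrightarrow> L2 mu (g k)"
  shows "AE z in mu. lifted_op \<pi> T \<rho> (\<lambda>z. \<Sum>k\<in>K. c k * g k z) z = (\<Sum>k\<in>K. c k * lifted_op \<pi> T \<rho> (g k) z)"
proof -
  have sl: "AE x in \<pi>. lifted_op \<pi> T \<rho> (\<lambda>z. \<Sum>k\<in>K. c k * g k z) (x, v) = (\<Sum>k\<in>K. c k * lifted_op \<pi> T \<rho> (g k) (x, v))"
    if v: "v \<in> {-1,1}" for v
  proof -
    have "AE x in \<pi>. \<forall>k\<in>K. integrable (T v x) (\<lambda>y. g k (y, v))"
    proof (rule AE_finite_allI[OF K])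
      fix k assume "k \<in> K"
      then have "L2 \<pi> (\<lambda>x. g k (x, v))" using L2_slice[OF g v] by simp
      from AE_sq_int[OF this v] show "AE x in \<pi>. integrable (T v x) (\<lambda>y. g k (y, v))" by eventually_elim simp
    qed
    then show ?thesis
    proof eventually_elim
      case (elim x)
      then show ?case unfolding lifted_slice
        by (simp add: sum_distrib_left sum.distrib algebra_simps)
    qed
  qed
  show ?thesis by (rule AE_mu_from_slices) (use sl in auto)
qed

end

context LK begin

lemma ip_P_le:
  assumes sr: "switching_rate \<pi> T \<rho>" and d: "L2 mu d"
  shows "ip d (lifted_op \<pi> T \<rho> d) \<le> ip d d"
proof -
  let ?P = "lifted_op \<pi> T \<rho> d"
  have PL: "L2 mu ?P" using P_L2(1)[OF sr d] .
  have c: "ip ?P ?P \<le> ip d d" using P_L2(2)[OF sr d] .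
  have DL: "L2 mu (\<lambda>z. d z - ?P z)" using L2_diff[OF d PL] .
  have "0 \<le> ip (\<lambda>z. d z - ?P z) (\<lambda>z. d z - ?P z)" by (rule ip_self_nonneg)
  also have "\<dots> = ip d d - 2 * ip d ?P + ip ?P ?P"
    using ip_diff_left[OF DL d PL] ip_diff_right[OF d d PL] ip_diff_right[OF PL d PL] ip_sym[of ?P d]
    by simp
  finally show ?thesis using c by simp
qed

lemma AE_Q: "AE z in mu. R z \<Longrightarrow> AE z in mu. R (fst z, - snd z)"
proof -
  assume a: "AE z in mu. R z"
  have "AE x in \<pi>. R (x, -1)" "AE x in \<pi>. R (x, 1)" using AE_mu_slice[OF a] by auto
  then show ?thesis by (intro AE_mu_from_slices) simp_all
qed

lemma ip_cong_L2: "L2 mu u \<Longrightarrow> L2 mu w \<Longrightarrow> L2 mu y \<Longrightarrow> AE z in mu. w z = y z \<Longrightarrow> ip u w = ip u y"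
  by (rule ip_cong_AE) (auto simp: L2_def)

end

locale LK2 = LK \<pi> T for \<pi> :: "'a measure" and T +
  fixes \<rho>0 \<rho>1 :: "int \<Rightarrow> 'a \<Rightarrow> real"
  assumes sr0: "switching_rate \<pi> T \<rho>0" and sr1: "switching_rate \<pi> T \<rho>1"
    and le01: "\<And>v x. v \<in> {-1,1} \<Longrightarrow> x \<in> space \<pi> \<Longrightarrow> \<rho>0 v x \<le> \<rho>1 v x"
begin

abbreviation "P0 \<equiv> lifted_op \<pi> T \<rho>0"
abbreviation "P1 \<equiv> lifted_op \<pi> T \<rho>1"

definition cc :: "'a \<times> int \<Rightarrow> real" where "cc z = \<rho>1 (snd z) (fst z) - \<rho>0 (snd z) (fst z)"

definition Dop :: "('a \<times> int \<Rightarrow> real) \<Rightarrow> ('a \<times> int \<Rightarrow> real)" where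
  "Dop g = (\<lambda>z. cc z * (Qop g z - g z))"

lemma P1_eq: "P1 g z = P0 g z + Dop g z"
  by (cases z) (simp add: lifted_slice Dop_def cc_def pp_def algebra_simps)

lemma cc_sym: "x \<in> space \<pi> \<Longrightarrow> v \<in> {-1,1} \<Longrightarrow> cc (x, -v) = cc (x, v)"
  using sr_facts(3)[OF sr0, of v x] sr_facts(3)[OF sr1, of v x] by (auto simp: cc_def)

lemma cc_bounds: "x \<in> space \<pi> \<Longrightarrow> v \<in> {-1,1} \<Longrightarrow> 0 \<le> cc (x, v) \<and> cc (x, v) \<le> 1"
  using le01[of v x] sr_facts(1,7)[OF sr0, of v x] sr_facts(1,7)[OF sr1, of v x] by (auto simp: cc_def)

lemma cc_meas: "cc \<in> borel_measurable mu"
proof (rule meas_from_slices)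
  show "(\<lambda>x. cc (x, 1)) \<in> borel_measurable \<pi>"
    unfolding cc_def using sr_meas[OF sr0, of 1] sr_meas[OF sr1, of 1] by simp
  show "(\<lambda>x. cc (x, -1)) \<in> borel_measurable \<pi>"
    unfolding cc_def using sr_meas[OF sr0, of "-1"] sr_meas[OF sr1, of "-1"] by simp
qed

lemma D_L2: "L2 mu g \<Longrightarrow> L2 mu (Dop g)"
  unfolding Dop_def
  by (rule L2_mult_bounded[OF L2_diff[OF Q_L2] cc_meas, where B=1]) (auto simp: space_mu dest: cc_bounds)

lemma QD_AE: "AE z in mu. Qop (Dop g) z = - Dop g z"
proof (rule AE_I2)
  fix z assume "z \<in> space mu"
  then obtain x v where z: "z = (x, v)" "x \<in> space \<pi>" "v \<in> {-1,1}" by (auto simp: space_mu)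
  show "Qop (Dop g) z = - Dop g z" using cc_sym[OF z(2,3)] z by (simp add: Dop_def algebra_simps)
qed

lemma ip_QD: assumes "L2 mu a" "L2 mu b" shows "ip (Qop a) (Dop b) = - ip a (Dop b)"
proof -
  have "ip (Qop a) (Dop b) = ip a (Qop (Dop b))" by (rule ip_Q[OF assms(1) D_L2[OF assms(2)]])
  also have "\<dots> = ip a (\<lambda>z. - Dop b z)"
    by (rule ip_cong_L2[OF assms(1) Q_L2[OF D_L2[OF assms(2)]] L2_uminus[OF D_L2[OF assms(2)]] QD_AE])
  also have "\<dots> = - ip a (Dop b)" using ip_scale_right[of a "-1" "Dop b"] by simp
  finally show ?thesis .
qed

lemma ip_D_self: assumes a: "L2 mu a" shows "ip a (Dop a) \<le> 0"
proof -
  have a1: "L2 \<pi> (\<lambda>x. a (x, 1))" and a2: "L2 \<pi> (\<lambda>x. a (x, -1))" using L2_mu_iff a by auto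
  have c1: "L2 \<pi> (\<lambda>x. cc (x, 1) * a (x, 1))"
    by (rule L2_mult_bounded[OF a1 _ , where B=1]) (use cc_meas slice_meas in \<open>auto dest: cc_bounds\<close>)
  have c2: "L2 \<pi> (\<lambda>x. cc (x, 1) * a (x, -1))"
    by (rule L2_mult_bounded[OF a2 _ , where B=1]) (use cc_meas slice_meas in \<open>auto dest: cc_bounds\<close>)
  have e: "ip a (Dop a) = ((\<integral>x. a (x, 1) * (cc (x, 1) * (a (x, -1) - a (x, 1))) \<partial>\<pi>)
      + (\<integral>x. a (x, -1) * (cc (x, -1) * (a (x, 1) - a (x, -1))) \<partial>\<pi>)) / 2"
    using ip_slices[OF a D_L2[OF a]] by (simp add: Dop_def)
  have e2: "(\<integral>x. a (x, -1) * (cc (x, -1) * (a (x, 1) - a (x, -1))) \<partial>\<pi>)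
      = (\<integral>x. a (x, -1) * (cc (x, 1) * (a (x, 1) - a (x, -1))) \<partial>\<pi>)"
    using cc_sym[of _ 1] by (intro Bochner_Integration.integral_cong refl) simp
  have i1: "integrable \<pi> (\<lambda>x. a (x, 1) * (cc (x, 1) * (a (x, -1) - a (x, 1))))"
  proof -
    have "integrable \<pi> (\<lambda>x. (cc (x, 1) * a (x, 1)) * a (x, -1) - (cc (x, 1) * a (x, 1)) * a (x, 1))"
      using L2_prod_int[OF c1 a2] L2_prod_int[OF c1 a1] by simp
    then show ?thesis by (simp add: algebra_simps)
  qed
  have i2: "integrable \<pi> (\<lambda>x. a (x, -1) * (cc (x, 1) * (a (x, 1) - a (x, -1))))"
  proof -
    have "integrable \<pi> (\<lambda>x. (cc (x, 1) * a (x, -1)) * a (x, 1) - (cc (x, 1) * a (x, -1)) * a (x, -1))"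
      using L2_prod_int[OF c2 a1] L2_prod_int[OF c2 a2] by simp
    then show ?thesis by (simp add: algebra_simps)
  qed
  have "(\<integral>x. a (x, 1) * (cc (x, 1) * (a (x, -1) - a (x, 1))) \<partial>\<pi>) + (\<integral>x. a (x, -1) * (cc (x, 1) * (a (x, 1) - a (x, -1))) \<partial>\<pi>)
      = (\<integral>x. a (x, 1) * (cc (x, 1) * (a (x, -1) - a (x, 1))) + a (x, -1) * (cc (x, 1) * (a (x, 1) - a (x, -1))) \<partial>\<pi>)"
    using i1 i2 by simp
  also have "\<dots> \<le> (\<integral>x. 0 \<partial>\<pi>)"
  proof (rule integral_mono)
    show "integrable \<pi> (\<lambda>x. a (x, 1) * (cc (x, 1) * (a (x, -1) - a (x, 1))) + a (x, -1) * (cc (x, 1) * (a (x, 1) - a (x, -1))))"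
      using i1 i2 by simp
    show "integrable \<pi> (\<lambda>x. 0::real)" by simp
    fix x assume x: "x \<in> space \<pi>"
    have "a (x, 1) * (cc (x, 1) * (a (x, -1) - a (x, 1))) + a (x, -1) * (cc (x, 1) * (a (x, 1) - a (x, -1)))
        = - (cc (x, 1) * (a (x, 1) - a (x, -1))\<^sup>2)" by (simp add: power2_eq_square algebra_simps)
    also have "\<dots> \<le> 0" using cc_bounds[OF x, of 1] by simp
    finally show "a (x, 1) * (cc (x, 1) * (a (x, -1) - a (x, 1))) + a (x, -1) * (cc (x, 1) * (a (x, 1) - a (x, -1))) \<le> 0" .
  qed
  finally show ?thesis using e e2 by simp
qed

end

context LK begin

lemma P_diff_AE:
  assumes g: "L2 mu g" and h: "L2 mu h"
  shows "AE z in mu. lifted_op \<pi> T \<rho> (\<lambda>z. g z - h z) z = lifted_op \<pi> T \<rho> g z - lifted_op \<pi> T \<rho> h z"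
proof -
  have sl: "AE x in \<pi>. lifted_op \<pi> T \<rho> (\<lambda>z. g z - h z) (x, v) = lifted_op \<pi> T \<rho> g (x, v) - lifted_op \<pi> T \<rho> h (x, v)"
    if v: "v \<in> {-1,1}" for v
  proof -
    have a1: "AE x in \<pi>. integrable (T v x) (\<lambda>y. g (y, v))"
      using AE_sq_int[OF L2_slice[OF g v] v] by eventually_elim simp
    have a2: "AE x in \<pi>. integrable (T v x) (\<lambda>y. h (y, v))"
      using AE_sq_int[OF L2_slice[OF h v] v] by eventually_elim simp
    from a1 a2 show ?thesis
    proof eventually_elim
      case (elim x)
      then show ?case unfolding lifted_slice by (simp add: algebra_simps)
    qed
  qed
  show ?thesis by (rule AE_mu_from_slices) (use sl in auto)
qed

end

context LK2 begin

lemma key_ineq: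
  assumes f: "L2 mu f" and a0: "L2 mu a0" and a1: "L2 mu a1" and r0: "L2 mu r0" and r1: "L2 mu r1"
    and Qf: "AE z in mu. f (fst z, - snd z) = f z" and lam: "0 \<le> lam" "lam \<le> 1"
    and e0: "AE z in mu. a0 z - lam * P0 a0 z = f z + r0 z"
    and e1: "AE z in mu. a1 z - lam * P1 a1 z = f z + r1 z"
  shows "ip (Qop a0) r1 - ip (Qop r0) a1 - ip (\<lambda>z. a1 z - a0 z) (\<lambda>z. r1 z - r0 z) \<le> ip f a1 - ip f a0"
proof -
  have Pa0: "L2 mu (P0 a0)" and Pa1: "L2 mu (P0 a1)" using P_L2(1)[OF sr0] a0 a1 by auto
  have Da1: "L2 mu (Dop a1)" using D_L2[OF a1] .
  have Qa0: "L2 mu (Qop a0)" and Qr0: "L2 mu (Qop r0)" and QPa0: "L2 mu (Qop (P0 a0))"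
    using Q_L2 a0 r0 Pa0 by auto
  have sPa0: "L2 mu (\<lambda>z. lam * Qop (P0 a0) z)" using L2_scale[OF QPa0] .
  have w1: "L2 mu (\<lambda>z. Qop a0 z - lam * Qop (P0 a0) z)" using L2_diff[OF Qa0 sPa0] .
  have w2: "L2 mu (\<lambda>z. Qop a0 z - lam * Qop (P0 a0) z - Qop r0 z)" using L2_diff[OF w1 Qr0] .
  have h1: "AE z in mu. f z = Qop a0 z - lam * Qop (P0 a0) z - Qop r0 z"
    using AE_Q[OF e0] Qf by eventually_elim (simp add: Qop_def)
  have h2: "ip a1 f = ip a1 (Qop a0) - lam * ip a1 (Qop (P0 a0)) - ip a1 (Qop r0)"
  proof -
    have "ip a1 f = ip a1 (\<lambda>z. Qop a0 z - lam * Qop (P0 a0) z - Qop r0 z)"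
      by (rule ip_cong_L2[OF a1 f w2 h1])
    also have "\<dots> = ip a1 (\<lambda>z. Qop a0 z - lam * Qop (P0 a0) z) - ip a1 (Qop r0)"
      using ip_diff_right[OF a1 w1 Qr0] by simp
    also have "ip a1 (\<lambda>z. Qop a0 z - lam * Qop (P0 a0) z) = ip a1 (Qop a0) - lam * ip a1 (Qop (P0 a0))"
      using ip_diff_right[OF a1 Qa0 sPa0] ip_scale_right[of a1 lam "Qop (P0 a0)"] by simp
    finally show ?thesis .
  qed
  have h4: "ip a1 (Qop (P0 a0)) = ip (Qop a0) (P0 a1)"
    using P_adj[OF sr0 Qa0 a1] by (simp add: ip_sym)
  have h5: "AE z in mu. a1 z - lam * P0 a1 z = f z + r1 z + lam * Dop a1 z"
    using e1 by eventually_elim (simp add: P1_eq algebra_simps)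
  have sPa1: "L2 mu (\<lambda>z. lam * P0 a1 z)" using L2_scale[OF Pa1] .
  have sDa1: "L2 mu (\<lambda>z. lam * Dop a1 z)" using L2_scale[OF Da1] .
  have fr1: "L2 mu (\<lambda>z. f z + r1 z)" using L2_add[OF f r1] .
  have h6: "ip (Qop a0) a1 - lam * ip (Qop a0) (P0 a1) = ip (Qop a0) f + ip (Qop a0) r1 + lam * ip (Qop a0) (Dop a1)"
  proof -
    have "ip (Qop a0) a1 - lam * ip (Qop a0) (P0 a1) = ip (Qop a0) (\<lambda>z. a1 z - lam * P0 a1 z)"
      using ip_diff_right[OF Qa0 a1 sPa1] ip_scale_right[of "Qop a0" lam "P0 a1"] by simp
    also have "\<dots> = ip (Qop a0) (\<lambda>z. f z + r1 z + lam * Dop a1 z)"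
      by (rule ip_cong_L2[OF Qa0 L2_diff[OF a1 sPa1] L2_add[OF fr1 sDa1] h5])
    also have "\<dots> = ip (Qop a0) f + ip (Qop a0) r1 + lam * ip (Qop a0) (Dop a1)"
      using ip_add_right[OF Qa0 fr1 sDa1] ip_add_right[OF Qa0 f r1] ip_scale_right[of "Qop a0" lam "Dop a1"] by simp
    finally show ?thesis .
  qed
  have h7: "ip (Qop a0) f = ip f a0"
  proof -
    have "ip (Qop a0) f = ip a0 (Qop f)" by (rule ip_Q[OF a0 f])
    also have "\<dots> = ip a0 f"
      by (rule ip_cong_L2[OF a0 Q_L2[OF f] f]) (use Qf in \<open>simp add: Qop_def\<close>)
    finally show ?thesis by (simp add: ip_sym)
  qed
  have h8: "ip (Qop a0) (Dop a1) = - ip a0 (Dop a1)" by (rule ip_QD[OF a0 a1])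
  have Eq1: "ip f a1 - ip f a0 = ip (Qop a0) r1 - lam * ip a0 (Dop a1) - ip (Qop r0) a1"
  proof -
    have "ip f a1 = ip a1 f" by (simp add: ip_sym)
    also have "\<dots> = (ip (Qop a0) a1 - lam * ip (Qop a0) (P0 a1)) - ip (Qop r0) a1"
      using h2 h4 by (simp add: ip_sym)
    also have "\<dots> = ip f a0 + ip (Qop a0) r1 - lam * ip a0 (Dop a1) - ip (Qop r0) a1"
      using h6 h7 h8 by simp
    finally show ?thesis by simp
  qed
  define d where "d = (\<lambda>z. a1 z - a0 z)"
  have dL: "L2 mu d" unfolding d_def using L2_diff[OF a1 a0] .
  have Pd: "L2 mu (P0 d)" using P_L2(1)[OF sr0 dL] .
  have sPd: "L2 mu (\<lambda>z. lam * P0 d z)" using L2_scale[OF Pd] .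
  have r10: "L2 mu (\<lambda>z. r1 z - r0 z)" using L2_diff[OF r1 r0] .
  have k1: "AE z in mu. P0 d z = P0 a1 z - P0 a0 z" unfolding d_def by (rule P_diff_AE[OF a1 a0])
  have k2: "AE z in mu. d z - lam * P0 d z = r1 z - r0 z + lam * Dop a1 z"
    using k1 h5 e0
  proof eventually_elim
    case (elim z)
    have "d z - lam * P0 d z = (a1 z - lam * P0 a1 z) - (a0 z - lam * P0 a0 z)"
      using elim(1) by (simp add: d_def right_diff_distrib)
    also have "\<dots> = r1 z - r0 z + lam * Dop a1 z" using elim(2,3) by simp
    finally show ?case .
  qed
  have k3: "ip d d - lam * ip d (P0 d) = ip d (\<lambda>z. r1 z - r0 z) + lam * ip d (Dop a1)"
  proof -
    have "ip d d - lam * ip d (P0 d) = ip d (\<lambda>z. d z - lam * P0 d z)"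
      using ip_diff_right[OF dL dL sPd] ip_scale_right[of d lam "P0 d"] by simp
    also have "\<dots> = ip d (\<lambda>z. r1 z - r0 z + lam * Dop a1 z)"
      by (rule ip_cong_L2[OF dL L2_diff[OF dL sPd] L2_add[OF r10 sDa1] k2])
    also have "\<dots> = ip d (\<lambda>z. r1 z - r0 z) + lam * ip d (Dop a1)"
      using ip_add_right[OF dL r10 sDa1] ip_scale_right[of d lam "Dop a1"] by simp
    finally show ?thesis .
  qed
  have k4: "ip d (Dop a1) = ip a1 (Dop a1) - ip a0 (Dop a1)"
    unfolding d_def by (rule ip_diff_left[OF Da1 a1 a0])
  have pos1: "0 \<le> ip d d - lam * ip d (P0 d)"
  proof -
    have "lam * ip d (P0 d) \<le> lam * ip d d" using ip_P_le[OF sr0 dL] lam(1) by (rule mult_left_mono)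
    also have "\<dots> \<le> ip d d" by (rule mult_left_le_one_le[OF ip_self_nonneg lam(1) lam(2)])
    finally show ?thesis by simp
  qed
  have pos2: "0 \<le> - lam * ip a1 (Dop a1)" using ip_D_self[OF a1] lam(1)
    by (simp add: mult_nonneg_nonpos)
  show ?thesis using Eq1 k3 k4 pos1 pos2 unfolding d_def by (simp add: algebra_simps)
qed

end

context piS begin

lemma ip_sum_left: "finite K \<Longrightarrow> L2 mu u \<Longrightarrow> (\<And>k. k \<in> K \<Longrightarrow> L2 mu (g k)) \<Longrightarrow>
    ip (\<lambda>z. \<Sum>k\<in>K. g k z) u = (\<Sum>k\<in>K. ip (g k) u)"
  using ip_sum_right[of K u g] by (simp add: ip_sym)

lemma ip_abs_le: assumes "L2 mu u" "L2 mu w" shows "\<bar>ip u w\<bar> \<le> (ip u u + ip w w) / 2"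
  using ip_bound[OF assms, of 1] by simp

lemma ip_diff_self_le: assumes x: "L2 mu x" and y: "L2 mu y"
  shows "ip (\<lambda>z. x z - y z) (\<lambda>z. x z - y z) \<le> 2 * ip x x + 2 * ip y y"
proof -
  have d: "L2 mu (\<lambda>z. x z - y z)" using L2_diff[OF x y] .
  have e: "ip (\<lambda>z. x z - y z) (\<lambda>z. x z - y z) = ip x x - 2 * ip x y + ip y y"
    using ip_diff_left[OF d x y] ip_diff_right[OF x x y] ip_diff_right[OF y x y] ip_sym[of y x] by simp
  have "\<bar>ip x y\<bar> \<le> (ip x x + ip y y) / 2" by (rule ip_abs_le[OF x y])
  then show ?thesis using e by (simp add: abs_le_iff)
qed

lemma ip_sum_self_le:
  assumes K: "finite K" and g: "\<And>k. k \<in> K \<Longrightarrow> L2 mu (g k)" and B: "\<And>k. k \<in> K \<Longrightarrow> ip (g k) (g k) \<le> B"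
    and c: "\<And>k. k \<in> K \<Longrightarrow> 0 \<le> c k"
  shows "ip (\<lambda>z. \<Sum>k\<in>K. c k * g k z) (\<lambda>z. \<Sum>k\<in>K. c k * g k z) \<le> (\<Sum>k\<in>K. c k)\<^sup>2 * B"
proof -
  have cg: "\<And>k. k \<in> K \<Longrightarrow> L2 mu (\<lambda>z. c k * g k z)" using g L2_scale by blast
  have S: "L2 mu (\<lambda>z. \<Sum>k\<in>K. c k * g k z)" using L2_sum[OF K cg] .
  have "ip (\<lambda>z. \<Sum>k\<in>K. c k * g k z) (\<lambda>z. \<Sum>k\<in>K. c k * g k z) = (\<Sum>j\<in>K. \<Sum>k\<in>K. c j * c k * ip (g j) (g k))"
  proof -
    have "ip (\<lambda>z. \<Sum>k\<in>K. c k * g k z) (\<lambda>z. \<Sum>k\<in>K. c k * g k z) = (\<Sum>j\<in>K. ip (\<lambda>z. c j * g j z) (\<lambda>z. \<Sum>k\<in>K. c k * g k z))"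
      by (rule ip_sum_left[OF K S cg])
    also have "\<dots> = (\<Sum>j\<in>K. \<Sum>k\<in>K. ip (\<lambda>z. c j * g j z) (\<lambda>z. c k * g k z))"
      using ip_sum_right[OF K cg cg] by simp
    also have "\<dots> = (\<Sum>j\<in>K. \<Sum>k\<in>K. c j * c k * ip (g j) (g k))"
      by (simp add: ip_scale_left ip_scale_right mult.assoc)
    finally show ?thesis .
  qed
  also have "\<dots> \<le> (\<Sum>j\<in>K. \<Sum>k\<in>K. c j * c k * B)"
  proof (intro sum_mono)
    fix j k assume j: "j \<in> K" and k: "k \<in> K"
    have "ip (g j) (g k) \<le> B" using ip_abs_le[OF g[OF j] g[OF k]] B[OF j] B[OF k] by (simp add: abs_le_iff)
    then show "c j * c k * ip (g j) (g k) \<le> c j * c k * B"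
      using c[OF j] c[OF k] by (intro mult_left_mono) auto
  qed
  also have "\<dots> = (\<Sum>k\<in>K. c k)\<^sup>2 * B"
    by (simp add: power2_eq_square sum_distrib_left sum_distrib_right mult.assoc mult.left_commute)
  finally show ?thesis .
qed

end

context LK begin

lemma pow_L2:
  assumes sr: "switching_rate \<pi> T \<rho>" and f: "L2 mu f"
  shows "L2 mu ((lifted_op \<pi> T \<rho> ^^ k) f) \<and> ip ((lifted_op \<pi> T \<rho> ^^ k) f) ((lifted_op \<pi> T \<rho> ^^ k) f) \<le> ip f f"
proof (induction k)
  case 0 then show ?case using f by simp
next
  case (Suc k)
  then show ?case using P_L2[OF sr, of "(lifted_op \<pi> T \<rho> ^^ k) f"] by auto
qed

definition asum :: "(int \<Rightarrow> 'a \<Rightarrow> real) \<Rightarrow> real \<Rightarrow> ('a \<times> int \<Rightarrow> real) \<Rightarrow> nat \<Rightarrow> 'a \<times> int \<Rightarrow> real" where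
  "asum \<rho> lam f N = (\<lambda>z. \<Sum>k<N. lam ^ k * (lifted_op \<pi> T \<rho> ^^ k) f z)"

lemma asum_L2: "switching_rate \<pi> T \<rho> \<Longrightarrow> L2 mu f \<Longrightarrow> L2 mu (asum \<rho> lam f N)"
  unfolding asum_def by (intro L2_sum L2_scale) (auto dest: pow_L2)

lemma asum_eq:
  assumes sr: "switching_rate \<pi> T \<rho>" and f: "L2 mu f"
  shows "AE z in mu. asum \<rho> lam f N z - lam * lifted_op \<pi> T \<rho> (asum \<rho> lam f N) z
     = f z + (- (lam ^ N * (lifted_op \<pi> T \<rho> ^^ N) f z))"
proof -
  let ?P = "lifted_op \<pi> T \<rho>"
  have "AE z in mu. ?P (asum \<rho> lam f N) z = (\<Sum>k<N. lam ^ k * ?P ((?P ^^ k) f) z)"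
    unfolding asum_def by (rule P_sum_AE) (use pow_L2[OF sr f] in auto)
  then show ?thesis
  proof eventually_elim
    case (elim z)
    have "asum \<rho> lam f N z - lam * ?P (asum \<rho> lam f N) z
        = (\<Sum>k<N. lam ^ k * (?P ^^ k) f z) - (\<Sum>k<N. lam ^ Suc k * (?P ^^ Suc k) f z)"
      using elim by (simp add: asum_def sum_distrib_left mult.assoc)
    also have "\<dots> = - (\<Sum>k<N. lam ^ Suc k * (?P ^^ Suc k) f z - lam ^ k * (?P ^^ k) f z)"
      by (simp add: sum_subtractf)
    also have "\<dots> = f z + (- (lam ^ N * (?P ^^ N) f z))"
      by (subst sum_lessThan_telescope) simp
    finally show ?case .
  qed
qed

lemma asum_norm:
  assumes sr: "switching_rate \<pi> T \<rho>" and f: "L2 mu f" and lam: "0 \<le> lam" "lam < 1"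
  shows "ip (asum \<rho> lam f N) (asum \<rho> lam f N) \<le> ip f f / (1 - lam)\<^sup>2"
proof -
  have "ip (asum \<rho> lam f N) (asum \<rho> lam f N) \<le> (\<Sum>k<N. lam ^ k)\<^sup>2 * ip f f"
    unfolding asum_def by (rule ip_sum_self_le) (use pow_L2[OF sr f] lam in auto)
  also have "\<dots> \<le> (1 / (1 - lam))\<^sup>2 * ip f f"
  proof -
    have s0: "0 \<le> (\<Sum>k<N. lam ^ k)" using lam by (intro sum_nonneg) auto
    have "(\<Sum>k<N. lam ^ k) \<le> (\<Sum>k. lam ^ k)"
      using lam by (intro sum_le_suminf summable_geometric) auto
    also have "\<dots> = 1 / (1 - lam)" using lam by (simp add: suminf_geometric)
    finally have "(\<Sum>k<N. lam ^ k)\<^sup>2 \<le> (1 / (1 - lam))\<^sup>2" using s0 by (intro power_mono) auto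
    then show ?thesis using ip_self_nonneg[of f] by (intro mult_right_mono) auto
  qed
  finally show ?thesis by (simp add: power_divide)
qed

lemma ip_asum: "switching_rate \<pi> T \<rho> \<Longrightarrow> L2 mu f \<Longrightarrow>
  ip f (asum \<rho> lam f N) = (\<Sum>k<N. lam ^ k * ip f ((lifted_op \<pi> T \<rho> ^^ k) f))"
  unfolding asum_def
  by (subst ip_sum_right) (auto simp: ip_scale_right intro!: L2_scale dest: pow_L2)

lemma summable_S:
  assumes sr: "switching_rate \<pi> T \<rho>" and f: "L2 mu f" and lam: "0 \<le> lam" "lam < 1"
  shows "summable (\<lambda>k. lam ^ k * ip f ((lifted_op \<pi> T \<rho> ^^ k) f))"
proof -
  have sg: "summable (\<lambda>n. lam ^ n * ip f f)" using lam by (intro summable_mult2 summable_geometric) simp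
  show ?thesis
  proof (rule summable_comparison_test[OF _ sg])
  show "\<exists>N. \<forall>n\<ge>N. norm (lam ^ n * ip f ((lifted_op \<pi> T \<rho> ^^ n) f)) \<le> lam ^ n * ip f f"
  proof (intro exI allI impI)
    fix n
    have "\<bar>ip f ((lifted_op \<pi> T \<rho> ^^ n) f)\<bar> \<le> ip f f"
      using ip_abs_le[OF f, of "(lifted_op \<pi> T \<rho> ^^ n) f"] pow_L2[OF sr f, of n] by simp
    then show "norm (lam ^ n * ip f ((lifted_op \<pi> T \<rho> ^^ n) f)) \<le> lam ^ n * ip f f"
      using lam by (simp add: abs_mult mult_left_mono)
  qed
  qed
qed

end

context piS begin

lemma ip_small:
  assumes x: "L2 mu x" and y: "L2 mu y" and t: "0 < t" and X: "ip x x \<le> X" and Y: "ip y y \<le> t\<^sup>2 * Y"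
  shows "\<bar>ip x y\<bar> \<le> t * (X + Y) / 2"
proof -
  have "\<bar>ip x y\<bar> \<le> (t * ip x x + ip y y / t) / 2" by (rule ip_bound[OF x y t])
  also have "ip y y / t \<le> t * Y"
  proof -
    have "ip y y / t \<le> (t\<^sup>2 * Y) / t" using Y t by (intro divide_right_mono) auto
    also have "(t\<^sup>2 * Y) / t = t * Y" using t by (simp add: power2_eq_square)
    finally show ?thesis .
  qed
  also have "t * ip x x \<le> t * X" using X t by simp
  finally show ?thesis by (simp add: algebra_simps)
qed

end

context LK2 begin

lemma S_mono:
  assumes f: "L2 mu f" and Qf: "AE z in mu. f (fst z, - snd z) = f z" and lam: "0 < lam" "lam < 1"
  shows "(\<Sum>k. lam ^ k * ip f ((P0 ^^ k) f)) \<le> (\<Sum>k. lam ^ k * ip f ((P1 ^^ k) f))"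
proof -
  define B where "B = ip f f"
  define A where "A = ip f f / (1 - lam)\<^sup>2"
  define G0 where "G0 N = ip f (asum \<rho>0 lam f N)" for N
  define G1 where "G1 N = ip f (asum \<rho>1 lam f N)" for N
  have lim0: "G0 \<longlonglongrightarrow> (\<Sum>k. lam ^ k * ip f ((P0 ^^ k) f))"
    unfolding G0_def ip_asum[OF sr0 f] using summable_S[OF sr0 f] lam by (intro summable_LIMSEQ) auto
  have lim1: "G1 \<longlonglongrightarrow> (\<Sum>k. lam ^ k * ip f ((P1 ^^ k) f))"
    unfolding G1_def ip_asum[OF sr1 f] using summable_S[OF sr1 f] lam by (intro summable_LIMSEQ) auto
  have bound: "- (lam ^ N * (3 * (A + B))) \<le> G1 N - G0 N" for N
  proof -
    define a0 where "a0 = asum \<rho>0 lam f N"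
    define a1 where "a1 = asum \<rho>1 lam f N"
    define p0 where "p0 = (P0 ^^ N) f"
    define p1 where "p1 = (P1 ^^ N) f"
    define r0 where "r0 = (\<lambda>z. (- (lam ^ N)) * p0 z)"
    define r1 where "r1 = (\<lambda>z. (- (lam ^ N)) * p1 z)"
    have a0L: "L2 mu a0" and a1L: "L2 mu a1" unfolding a0_def a1_def using asum_L2 sr0 sr1 f by auto
    have p0L: "L2 mu p0" and p0n: "ip p0 p0 \<le> B" unfolding p0_def B_def using pow_L2[OF sr0 f, of N] by auto
    have p1L: "L2 mu p1" and p1n: "ip p1 p1 \<le> B" unfolding p1_def B_def using pow_L2[OF sr1 f, of N] by auto
    have r0L: "L2 mu r0" unfolding r0_def by (rule L2_scale[OF p0L])
    have r1L: "L2 mu r1" unfolding r1_def by (rule L2_scale[OF p1L])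
    have a0n: "ip a0 a0 \<le> A" and a1n: "ip a1 a1 \<le> A"
      unfolding a0_def a1_def A_def using asum_norm[OF sr0 f] asum_norm[OF sr1 f] lam by auto
    have r0n: "ip r0 r0 \<le> (lam ^ N)\<^sup>2 * B"
    proof -
      have "ip r0 r0 = (- (lam ^ N)) * ((- (lam ^ N)) * ip p0 p0)" unfolding r0_def
        by (simp only: ip_scale_left ip_scale_right)
      also have "\<dots> = (lam ^ N)\<^sup>2 * ip p0 p0" by (simp add: power2_eq_square)
      also have "\<dots> \<le> (lam ^ N)\<^sup>2 * B" using p0n by (intro mult_left_mono) auto
      finally show ?thesis .
    qed
    have r1n: "ip r1 r1 \<le> (lam ^ N)\<^sup>2 * B"
    proof -
      have "ip r1 r1 = (- (lam ^ N)) * ((- (lam ^ N)) * ip p1 p1)" unfolding r1_def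
        by (simp only: ip_scale_left ip_scale_right)
      also have "\<dots> = (lam ^ N)\<^sup>2 * ip p1 p1" by (simp add: power2_eq_square)
      also have "\<dots> \<le> (lam ^ N)\<^sup>2 * B" using p1n by (intro mult_left_mono) auto
      finally show ?thesis .
    qed
    have e0: "AE z in mu. a0 z - lam * P0 a0 z = f z + r0 z"
      using asum_eq[OF sr0 f, of lam N] by eventually_elim (simp add: a0_def r0_def p0_def)
    have e1: "AE z in mu. a1 z - lam * P1 a1 z = f z + r1 z"
      using asum_eq[OF sr1 f, of lam N] by eventually_elim (simp add: a1_def r1_def p1_def)
    have key: "ip (Qop a0) r1 - ip (Qop r0) a1 - ip (\<lambda>z. a1 z - a0 z) (\<lambda>z. r1 z - r0 z) \<le> ip f a1 - ip f a0"
      by (rule key_ineq[OF f a0L a1L r0L r1L Qf]) (use lam e0 e1 in auto)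
    have t: "0 < lam ^ N" using lam by simp
    have Qa0n: "ip (Qop a0) (Qop a0) \<le> A" using ip_Q[OF a0L Q_L2[OF a0L]] a0n by simp
    have Qr0n: "ip (Qop r0) (Qop r0) \<le> (lam ^ N)\<^sup>2 * B" using ip_Q[OF r0L Q_L2[OF r0L]] r0n by simp
    have b1: "\<bar>ip (Qop a0) r1\<bar> \<le> lam ^ N * (A + B) / 2"
      by (rule ip_small[OF Q_L2[OF a0L] r1L t Qa0n r1n])
    have b2: "\<bar>ip (Qop r0) a1\<bar> \<le> lam ^ N * (A + B) / 2"
      using ip_small[OF a1L Q_L2[OF r0L] t a1n Qr0n] by (simp add: ip_sym)
    have dn: "ip (\<lambda>z. a1 z - a0 z) (\<lambda>z. a1 z - a0 z) \<le> 4 * A"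
      using ip_diff_self_le[OF a1L a0L] a0n a1n by simp
    have rn: "ip (\<lambda>z. r1 z - r0 z) (\<lambda>z. r1 z - r0 z) \<le> (lam ^ N)\<^sup>2 * (4 * B)"
      using ip_diff_self_le[OF r1L r0L] r0n r1n by simp
    have b3: "\<bar>ip (\<lambda>z. a1 z - a0 z) (\<lambda>z. r1 z - r0 z)\<bar> \<le> lam ^ N * (4 * A + 4 * B) / 2"
      by (rule ip_small[OF L2_diff[OF a1L a0L] L2_diff[OF r1L r0L] t dn rn])
    have "- (lam ^ N * (3 * (A + B))) \<le> ip (Qop a0) r1 - ip (Qop r0) a1 - ip (\<lambda>z. a1 z - a0 z) (\<lambda>z. r1 z - r0 z)"
      using b1 b2 b3 by (simp add: abs_le_iff algebra_simps)
    also have "\<dots> \<le> G1 N - G0 N" using key by (simp add: G0_def G1_def a0_def a1_def)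
    finally show ?thesis .
  qed
  have "(\<lambda>N. - (lam ^ N * (3 * (A + B)))) \<longlonglongrightarrow> - (0 * (3 * (A + B)))"
    using lam by (intro tendsto_minus tendsto_mult_right LIMSEQ_power_zero) auto
  then have z: "(\<lambda>N. - (lam ^ N * (3 * (A + B)))) \<longlonglongrightarrow> 0" by simp
  have "0 \<le> (\<Sum>k. lam ^ k * ip f ((P1 ^^ k) f)) - (\<Sum>k. lam ^ k * ip f ((P0 ^^ k) f))"
    by (rule LIMSEQ_le[OF z tendsto_diff[OF lim1 lim0]]) (use bound in auto)
  then show ?thesis by simp
qed

end

context LK begin

lemma var_formula:
  assumes sr: "switching_rate \<pi> T \<rho>" and fb: "L2 mu fb" and lam: "0 \<le> lam" "lam < 1"
    and fbdef: "fb = (\<lambda>z. f z - integral\<^sup>L mu f)"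
  shows "var_lambda mu (lifted_op \<pi> T \<rho>) lam f
     = 2 * (\<Sum>k. lam ^ k * ip fb ((lifted_op \<pi> T \<rho> ^^ k) fb)) - ip fb fb"
proof -
  let ?P = "lifted_op \<pi> T \<rho>"
  have s: "summable (\<lambda>k. lam ^ k * ip fb ((?P ^^ k) fb))" by (rule summable_S[OF sr fb lam])
  have "var_lambda mu ?P lam f = ip fb fb + 2 * (\<Sum>k. lam ^ Suc k * ip fb ((?P ^^ Suc k) fb))"
    unfolding var_lambda_def Let_def ip_def fbdef[symmetric] by (simp add: power2_eq_square)
  also have "(\<Sum>k. lam ^ Suc k * ip fb ((?P ^^ Suc k) fb)) = (\<Sum>k. lam ^ k * ip fb ((?P ^^ k) fb)) - ip fb fb"
    using suminf_split_head[OF s] by simp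
  finally show ?thesis by simp
qed

end

lemma var_le_pair:
  fixes \<pi> :: "'a measure" and T :: "int \<Rightarrow> 'a \<Rightarrow> 'a measure"
  assumes L: "LK2 \<pi> T \<rho>0 \<rho>1" and fb: "L2 (lift_measure \<pi>) fb"
    and Qf: "AE z in lift_measure \<pi>. fb (fst z, - snd z) = fb z" and lam: "0 \<le> lam" "lam < 1"
    and fbdef: "fb = (\<lambda>z. f z - integral\<^sup>L (lift_measure \<pi>) f)"
  shows "var_lambda (lift_measure \<pi>) (lifted_op \<pi> T \<rho>0) lam f \<le> var_lambda (lift_measure \<pi>) (lifted_op \<pi> T \<rho>1) lam f"
proof -
  interpret LK2 \<pi> T \<rho>0 \<rho>1 by (rule L)
  have fbL: "L2 mu fb" using fb by simp
  have S: "(\<Sum>k. lam ^ k * ip fb ((P0 ^^ k) fb)) \<le> (\<Sum>k. lam ^ k * ip fb ((P1 ^^ k) fb))"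
  proof (cases "lam = 0")
    case True
    have "(\<lambda>k. lam ^ k * ip fb ((P0 ^^ k) fb)) = (\<lambda>k. lam ^ k * ip fb ((P1 ^^ k) fb))"
    proof
      fix k show "lam ^ k * ip fb ((P0 ^^ k) fb) = lam ^ k * ip fb ((P1 ^^ k) fb)"
        using True by (cases k) auto
    qed
    then show ?thesis by simp
  next
    case False
    then have "0 < lam" using lam by simp
    then show ?thesis using S_mono[OF fbL Qf _ lam(2)] by simp
  qed
  show ?thesis
    using var_formula[OF sr0 fbL lam fbdef] var_formula[OF sr1 fbL lam fbdef] S by simp
qed

theorem theorem3p15:
  fixes \<pi> :: "'a measure" and T :: "int \<Rightarrow> 'a \<Rightarrow> 'a measure"
    and \<rho> :: "int \<Rightarrow> 'a \<Rightarrow> real" and f :: "'a \<times> int \<Rightarrow> real" and lam :: real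
  assumes "prob_space \<pi>"
    and "sub_stochastic_kernel \<pi> (T 1)" and "sub_stochastic_kernel \<pi> (T (-1))"
    and "\<And>A B. A \<in> sets \<pi> \<Longrightarrow> B \<in> sets \<pi> \<Longrightarrow>
           (\<integral>\<^sup>+ x. indicator A x * emeasure (T 1 x) B \<partial>\<pi>)
         = (\<integral>\<^sup>+ y. indicator B y * emeasure (T (-1) y) A \<partial>\<pi>)"
    and "switching_rate \<pi> T \<rho>"
    and "f \<in> borel_measurable (lift_measure \<pi>)"
    and "integrable (lift_measure \<pi>) (\<lambda>z. (f z)\<^sup>2)"
    and "AE z in lift_measure \<pi>. f (fst z, - snd z) = f z"
    and "0 \<le> lam" and "lam < 1"
  shows "var_lambda (lift_measure \<pi>)
           (lifted_op \<pi> T (\<lambda>v x. max 0 (measure (T (-v) x) (space \<pi>) - measure (T v x) (space \<pi>)))) lam f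
         \<le> var_lambda (lift_measure \<pi>) (lifted_op \<pi> T \<rho>) lam f
       \<and> var_lambda (lift_measure \<pi>) (lifted_op \<pi> T \<rho>) lam f
         \<le> var_lambda (lift_measure \<pi>)
             (lifted_op \<pi> T (\<lambda>v x. 1 - measure (T v x) (space \<pi>))) lam f"
proof -
  note P = assms(1) and sr = assms(5) and fm = assms(6) and fi = assms(7) and Qf = assms(8)
  have k1: "T 1 \<in> \<pi> \<rightarrow>\<^sub>M subprob_algebra \<pi>" using assms(2) unfolding sub_stochastic_kernel_def .
  have k2: "T (-1) \<in> \<pi> \<rightarrow>\<^sub>M subprob_algebra \<pi>" using assms(3) unfolding sub_stochastic_kernel_def .
  have LKf: "LK \<pi> T"
  proof (rule LK.intro)
    show "piS \<pi>" by (rule piS.intro[OF P])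
    show "LK_axioms \<pi> T" by (rule LK_axioms.intro[OF k1 k2 assms(4)])
  qed
  interpret L: LK \<pi> T by (rule LKf)
  define rt where "rt = (\<lambda>v x. max 0 (measure (T (-v) x) (space \<pi>) - measure (T v x) (space \<pi>)))"
  define rU where "rU = (\<lambda>v x. 1 - measure (T v x) (space \<pi>))"
  have am: "\<And>v x. measure (T v x) (space \<pi>) = L.am v x" by (simp add: L.am_def)
  have srt: "switching_rate \<pi> T rt"
    unfolding switching_rate_def
  proof (intro conjI ballI)
    fix v :: int assume v: "v \<in> {-1,1}"
    then have mv: "-v \<in> {-1,1}" by auto
    show "rt v \<in> borel_measurable \<pi>" unfolding rt_def am using L.am_meas[OF v] L.am_meas[OF mv] by measurable
  next
    fix x v assume x: "x \<in> space \<pi>" and v: "v \<in> {-1::int,1}"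
    then have mv: "-v \<in> {-1,1}" by auto
    show "0 \<le> rt v x" by (simp add: rt_def)
    show "rt v x \<le> 1 - measure (T v x) (space \<pi>)"
      using L.am_bounds[OF v x] L.am_bounds[OF mv x] by (simp add: rt_def am)
    show "rt v x - rt (- v) x = measure (T (- v) x) (space \<pi>) - measure (T v x) (space \<pi>)"
      by (simp add: rt_def)
  qed
  have srU: "switching_rate \<pi> T rU"
    unfolding switching_rate_def
  proof (intro conjI ballI)
    fix v :: int assume v: "v \<in> {-1,1}"
    show "rU v \<in> borel_measurable \<pi>" unfolding rU_def am using L.am_meas[OF v] by measurable
  next
    fix x v assume x: "x \<in> space \<pi>" and v: "v \<in> {-1::int,1}"
    show "0 \<le> rU v x" using L.am_bounds[OF v x] by (simp add: rU_def am)
    show "rU v x \<le> 1 - measure (T v x) (space \<pi>)" by (simp add: rU_def)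
    show "rU v x - rU (- v) x = measure (T (- v) x) (space \<pi>) - measure (T v x) (space \<pi>)"
      by (simp add: rU_def)
  qed
  have le1: "rt v x \<le> \<rho> v x" if v: "v \<in> {-1,1}" and x: "x \<in> space \<pi>" for v x
    using L.sr_facts(1,3)[OF sr v x] L.sr_facts(1)[OF sr _ x, of "-v"] v by (auto simp: rt_def am)
  have le2: "\<rho> v x \<le> rU v x" if v: "v \<in> {-1,1}" and x: "x \<in> space \<pi>" for v x
    using L.sr_facts(2)[OF sr v x] by (simp add: rU_def am)
  have LK2a: "LK2 \<pi> T rt \<rho>" by (intro LK2.intro LKf LK2_axioms.intro srt sr le1)
  have LK2b: "LK2 \<pi> T \<rho> rU" by (intro LK2.intro LKf LK2_axioms.intro srU sr le2)
  define fb where "fb = (\<lambda>z. f z - integral\<^sup>L (lift_measure \<pi>) f)"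
  have fL: "L2 (lift_measure \<pi>) f" using fm fi by (simp add: L2_def)
  have pmu: "prob_space (lift_measure \<pi>)"
    unfolding lift_measure_def by (rule prob_space_pair[OF P UU_prob])
  have cL: "L2 (lift_measure \<pi>) (\<lambda>z. integral\<^sup>L (lift_measure \<pi>) f)"
    using pmu by (simp add: L2_def prob_space.finite_measure finite_measure.integrable_const)
  have fbL: "L2 (lift_measure \<pi>) fb" unfolding fb_def by (rule L2_diff[OF fL cL])
  have Qfb: "AE z in lift_measure \<pi>. fb (fst z, - snd z) = fb z"
    using Qf by eventually_elim (simp add: fb_def)
  show ?thesis
    using var_le_pair[OF LK2a fbL Qfb assms(9,10) fb_def] var_le_pair[OF LK2b fbL Qfb assms(9,10) fb_def]
    by (simp add: rt_def rU_def)
qed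

end
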